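(* Let $k\geq 1$ and let $R$ be either $\mathbb{F}_q$ ($q$ a prime power) or $\mathbb{Z}/p^\ell\mathbb{Z}$ ($p$ prime, $\ell\geq1$). Let $E\subset R^2$, and suppose $|E|\gtrsim q^{1+\varepsilon}$ if $R=\mathbb{F}_q$, and $|E|\gtrsim p^{2\ell-1+\frac{1}{k+1}+\varepsilon}$ if $R=\mathbb{Z}/p^\ell\mathbb{Z}$, for some constant $\varepsilon>0$. For $g\in\mathrm{SL}_2(R)$ define $f(g)=\sum_{x\in R^2}E(x)E(gx)$, where $E(\cdot)$ denotes the indicator function of $E$. Then \[|E|^{2(k+1)}\lesssim |\mathcal{C}_{k+1}(E)|\sum_{g\in\mathrm{SL}_2(R)}f(g)^{k+1}.\]
   Context: For $x=(x_1,x_2),y=(y_1,y_2)\in R^2$, write $y^\perp=(y_2,-y_1)$, so $x\cdot y^\perp=x_1y_2-x_2y_1$. For $E\subset R^2$, define an equivalence relation $\sim$ on $E^{k+1}$ by $(x^1,\dots,x^{k+1})\sim(y^1,\dots,y^{k+1})$ iff $x^i\cdot x^{j\perp}=y^i\cdot y^{j\perp}$ for all pairs $i,j$; $\mathcal{C}_{k+1}(E)$ is the set of equivalence classes. $\mathrm{SL}_2(R)$ acts on $R^2$ by matrix multiplication. $X\lesssim Y$ means $X\leq CY$ with $C$ independent of the ring and of $E$ (possibly depending on $k,\varepsilon$). *)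

theory Defs
  imports "HOL-Number_Theory.Residues" "HOL-Algebra.Ring"
begin

definition plane :: "('a, 'b) ring_scheme \<Rightarrow> ('a \<times> 'a) set" where
  "plane R = carrier R \<times> carrier R"

definition dot_perp :: "('a, 'b) ring_scheme \<Rightarrow> 'a \<times> 'a \<Rightarrow> 'a \<times> 'a \<Rightarrow> 'a" where
  "dot_perp R x y = (fst x \<otimes>\<^bsub>R\<^esub> snd y) \<ominus>\<^bsub>R\<^esub> (snd x \<otimes>\<^bsub>R\<^esub> fst y)"

definition tuples :: "nat \<Rightarrow> ('a \<times> 'a) set \<Rightarrow> ('a \<times> 'a) list set" where
  "tuples m E = {xs. length xs = m \<and> set xs \<subseteq> E}"

definition tuple_equiv :: "('a, 'b) ring_scheme \<Rightarrow> nat \<Rightarrow> ('a \<times> 'a) set \<Rightarrow> (('a \<times> 'a) list \<times> ('a \<times> 'a) list) set" where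
  "tuple_equiv R m E = {(xs, ys). xs \<in> tuples m E \<and> ys \<in> tuples m E \<and>
      (\<forall>i<m. \<forall>j<m. dot_perp R (xs ! i) (xs ! j) = dot_perp R (ys ! i) (ys ! j))}"

definition config_classes :: "('a, 'b) ring_scheme \<Rightarrow> nat \<Rightarrow> ('a \<times> 'a) set \<Rightarrow> ('a \<times> 'a) list set set" where
  "config_classes R m E = tuples m E // tuple_equiv R m E"

(* 2x2 matrices ((a,b),(c,d)) = [[a,b],[c,d]] *)
type_synonym 'a mat2 = "('a \<times> 'a) \<times> ('a \<times> 'a)"

definition SL2 :: "('a, 'b) ring_scheme \<Rightarrow> 'a mat2 set" where
  "SL2 R = {((a, b), (c, d)). a \<in> carrier R \<and> b \<in> carrier R \<and> c \<in> carrier R \<and> d \<in> carrier R \<and>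
      (a \<otimes>\<^bsub>R\<^esub> d) \<ominus>\<^bsub>R\<^esub> (b \<otimes>\<^bsub>R\<^esub> c) = \<one>\<^bsub>R\<^esub>}"

definition mat_act :: "('a, 'b) ring_scheme \<Rightarrow> 'a mat2 \<Rightarrow> 'a \<times> 'a \<Rightarrow> 'a \<times> 'a" where
  "mat_act R g x = (case g of ((a, b), (c, d)) \<Rightarrow>
      ((a \<otimes>\<^bsub>R\<^esub> fst x) \<oplus>\<^bsub>R\<^esub> (b \<otimes>\<^bsub>R\<^esub> snd x),
       (c \<otimes>\<^bsub>R\<^esub> fst x) \<oplus>\<^bsub>R\<^esub> (d \<otimes>\<^bsub>R\<^esub> snd x)))"

definition fE :: "('a, 'b) ring_scheme \<Rightarrow> ('a \<times> 'a) set \<Rightarrow> 'a mat2 \<Rightarrow> real" where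
  "fE R E g = (\<Sum>x\<in>plane R. of_bool (x \<in> E) * of_bool (mat_act R g x \<in> E))"

end

theory Submission
  imports Defs
begin


lemma sum_sq_le:
  fixes a :: "'b \<Rightarrow> real"
  assumes "finite B"
  shows "(\<Sum>b\<in>B. a b)^2 \<le> real (card B) * (\<Sum>b\<in>B. (a b)^2)"
proof -
  have "(\<Sum>b\<in>B. a b)^2 = (\<Sum>b\<in>B. \<Sum>c\<in>B. a b * a c)"
    by (simp add: power2_eq_square sum_product)
  also have "\<dots> \<le> (\<Sum>b\<in>B. \<Sum>c\<in>B. ((a b)^2 + (a c)^2)/2)"
  proof (intro sum_mono)
    fix b c show "a b * a c \<le> ((a b)^2 + (a c)^2)/2"
    proof -
      have "((a b)^2 + (a c)^2)/2 - a b * a c = (a b - a c)^2/2"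
        by (simp add: power2_eq_square field_simps)
      moreover have "(a b - a c)^2/2 \<ge> 0" by simp
      ultimately show ?thesis by linarith
    qed
  qed
  also have "\<dots> = real (card B) * (\<Sum>b\<in>B. (a b)^2)"
    by (simp add: sum.distrib sum_divide_distrib[symmetric] sum_distrib_left[symmetric]
        sum.swap[of "\<lambda>b c. (a c)^2"] add_divide_distrib[symmetric] mult.commute)
  finally show ?thesis .
qed

lemma card_CS:
  assumes "finite A"
  shows "real (card A)^2 \<le> real (card (h ` A)) * real (card {p\<in>A\<times>A. h (fst p) = h (snd p)})"
proof -
  let ?fib = "\<lambda>b. {x\<in>A. h x = b}"
  have c1: "card A = (\<Sum>b\<in>h`A. card (?fib b))"
    using sum.image_gen[OF assms, of "\<lambda>_. 1::nat" h] by simp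
  let ?P = "{p\<in>A\<times>A. h (fst p) = h (snd p)}"
  have fP: "finite ?P" using assms by simp
  have c2: "card ?P = (\<Sum>b\<in>(\<lambda>p. h (fst p))`?P. card {p\<in>?P. h (fst p) = b})"
    using sum.image_gen[OF fP, of "\<lambda>_. 1::nat" "\<lambda>p. h (fst p)"] by simp
  have im: "(\<lambda>p. h (fst p))`?P = h`A"
  proof
    show "h ` A \<subseteq> (\<lambda>p. h (fst p)) ` ?P"
    proof
      fix b assume "b \<in> h`A" then obtain x where "x\<in>A" "b = h x" by auto
      then show "b \<in> (\<lambda>p. h (fst p)) ` ?P" by (auto intro!: image_eqI[of _ _ "(x,x)"])
    qed
  qed auto
  have fb: "{p\<in>?P. h (fst p) = b} = ?fib b \<times> ?fib b" for b by auto
  have c2': "card ?P = (\<Sum>b\<in>h`A. (card (?fib b))^2)"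
    using c2 unfolding im fb by (simp add: card_cartesian_product power2_eq_square)
  have "real (card A)^2 = (\<Sum>b\<in>h`A. real (card (?fib b)))^2" using c1 by simp
  also have "\<dots> \<le> real (card (h`A)) * (\<Sum>b\<in>h`A. (real (card (?fib b)))^2)"
    by (rule sum_sq_le) (use assms in auto)
  also have "(\<Sum>b\<in>h`A. (real (card (?fib b)))^2) = real (card ?P)"
    using c2' by simp
  finally show ?thesis .
qed

lemma finite_plane: "finite (carrier R) \<Longrightarrow> finite (plane R)"
  by (simp add: plane_def)

lemma finite_tuples: "finite E \<Longrightarrow> finite (tuples m E)"
  unfolding tuples_def using finite_lists_length_eq[of E m] by (simp add: conj_commute)

lemma card_tuples: "finite E \<Longrightarrow> card (tuples m E) = card E ^ m"
  unfolding tuples_def using card_lists_length_eq[of E m] by (simp add: conj_commute)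

lemma finite_SL2: "finite (carrier R) \<Longrightarrow> finite (SL2 R)"
proof -
  assume f: "finite (carrier R)"
  have "SL2 R \<subseteq> (carrier R \<times> carrier R) \<times> (carrier R \<times> carrier R)"
    by (auto simp: SL2_def)
  then show ?thesis using f by (meson finite_SigmaI finite_subset)
qed

lemma fE_card:
  assumes "finite (carrier R)" "E \<subseteq> plane R"
  shows "fE R E g = real (card {x\<in>E. mat_act R g x \<in> E})"
proof -
  have "fE R E g = (\<Sum>x\<in>plane R. of_bool (x \<in> E \<and> mat_act R g x \<in> E))"
    unfolding fE_def by (intro sum.cong) auto
  also have "\<dots> = real (card (plane R \<inter> {x. x \<in> E \<and> mat_act R g x \<in> E}))"
    using finite_plane[OF assms(1)] by simp
  also have "plane R \<inter> {x. x \<in> E \<and> mat_act R g x \<in> E} = {x\<in>E. mat_act R g x \<in> E}"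
    using assms(2) by auto
  finally show ?thesis .
qed

lemma card_good_tuples:
  assumes "finite E"
  shows "card {xs\<in>tuples m E. map (mat_act R g) xs \<in> tuples m E} = card {x\<in>E. mat_act R g x \<in> E} ^ m"
proof -
  have "{xs\<in>tuples m E. map (mat_act R g) xs \<in> tuples m E} = tuples m {x\<in>E. mat_act R g x \<in> E}"
    by (auto simp: tuples_def)
  then show ?thesis using card_tuples[of "{x\<in>E. mat_act R g x \<in> E}" m] assms by simp
qed

lemma GEN:
  assumes fin: "finite (carrier R)" and EP: "E \<subseteq> plane R" and GT: "G \<subseteq> tuples m E"
    and tau: "\<tau> ` G \<subseteq> Tset" and fT: "finite Tset"
    and H: "\<And>x y. x\<in>G \<Longrightarrow> y\<in>G \<Longrightarrow> (x,y) \<in> tuple_equiv R m E \<Longrightarrow> \<tau> x = \<tau> y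
              \<Longrightarrow> \<exists>g\<in>SL2 R. map (mat_act R g) x = y"
  shows "real (card G)^2 \<le> real (card Tset) * real (card (config_classes R m E)) * (\<Sum>g\<in>SL2 R. fE R E g ^ m)"
proof -
  have fE: "finite E" using EP finite_plane[OF fin] finite_subset by blast
  have fTu: "finite (tuples m E)" using finite_tuples[OF fE] .
  have fG: "finite G" using GT fTu finite_subset by blast
  define h where "h x = (tuple_equiv R m E `` {x}, \<tau> x)" for x
  let ?P = "{p\<in>G\<times>G. h (fst p) = h (snd p)}"
  have cs: "real (card G)^2 \<le> real (card (h ` G)) * real (card ?P)"
    by (rule card_CS[OF fG])
  have hG: "h ` G \<subseteq> config_classes R m E \<times> Tset"
    using GT tau unfolding h_def config_classes_def by (auto intro: quotientI)
  have fC: "finite (config_classes R m E)"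
    unfolding config_classes_def using fTu
  proof -
    have "tuples m E // tuple_equiv R m E = (\<lambda>x. tuple_equiv R m E `` {x}) ` tuples m E"
      by (auto simp: quotient_def)
    then show "finite (tuples m E // tuple_equiv R m E)" using fTu by simp
  qed
  have c1: "card (h ` G) \<le> card (config_classes R m E) * card Tset"
    using card_mono[OF _ hG] fC fT by (simp add: card_cartesian_product)
  have Pex: "\<exists>g\<in>SL2 R. map (mat_act R g) (fst p) = snd p" if "p \<in> ?P" for p
  proof -
    obtain x y where p: "p = (x,y)" by fastforce
    have xy: "x \<in> G" "y \<in> G" "h x = h y" using that p by auto
    have yT: "y \<in> tuples m E" using xy GT by auto
    have "(y,y) \<in> tuple_equiv R m E" using yT unfolding tuple_equiv_def by auto
    then have "y \<in> tuple_equiv R m E `` {x}" using xy(3) unfolding h_def by auto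
    then have "(x,y) \<in> tuple_equiv R m E" by auto
    moreover have "\<tau> x = \<tau> y" using xy(3) unfolding h_def by auto
    ultimately show ?thesis using H xy p by auto
  qed
  define F where "F p = (SOME g. g\<in>SL2 R \<and> map (mat_act R g) (fst p) = snd p, fst p)" for p
  have Fp: "fst (F p) \<in> SL2 R \<and> map (mat_act R (fst (F p))) (fst p) = snd p" if "p\<in>?P" for p
    unfolding F_def using someI_ex[OF Pex[OF that, unfolded Bex_def]] by simp
  have injF: "inj_on F ?P"
  proof (rule inj_onI)
    fix p q assume pq: "p \<in> ?P" "q \<in> ?P" "F p = F q"
    have "fst p = fst q" using pq(3) unfolding F_def by simp
    moreover have "snd p = snd q" using Fp[OF pq(1)] Fp[OF pq(2)] pq(3) \<open>fst p = fst q\<close> by metis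
    ultimately show "p = q" by (simp add: prod_eq_iff)
  qed
  let ?S = "SIGMA g:SL2 R. {xs\<in>tuples m E. map (mat_act R g) xs \<in> tuples m E}"
  have FS: "F ` ?P \<subseteq> ?S"
  proof
    fix q assume "q \<in> F ` ?P"
    then obtain p where p: "p \<in> ?P" "q = F p" by auto
    have "fst p \<in> tuples m E" "snd p \<in> tuples m E" using p(1) GT by auto
    then show "q \<in> ?S" using Fp[OF p(1)] p(2) by (cases q) (auto simp: F_def)
  qed
  have fS: "finite ?S" using finite_SL2[OF fin] fTu by auto
  have "card ?P = card (F ` ?P)" using card_image[OF injF] by simp
  also have "\<dots> \<le> card ?S" by (rule card_mono[OF fS FS])
  also have "card ?S = (\<Sum>g\<in>SL2 R. card {x\<in>E. mat_act R g x \<in> E} ^ m)"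
    by (subst card_SigmaI[OF finite_SL2[OF fin]]) (use fTu in \<open>auto intro!: sum.cong card_good_tuples[OF fE]\<close>)
  finally have "card ?P \<le> (\<Sum>g\<in>SL2 R. card {x\<in>E. mat_act R g x \<in> E} ^ m)" .
  then have c2: "real (card ?P) \<le> (\<Sum>g\<in>SL2 R. fE R E g ^ m)"
  proof -
    have "real (card ?P) \<le> real (\<Sum>g\<in>SL2 R. card {x\<in>E. mat_act R g x \<in> E} ^ m)"
      using \<open>card ?P \<le> _\<close> by linarith
    also have "\<dots> = (\<Sum>g\<in>SL2 R. fE R E g ^ m)"
      by (simp add: fE_card[OF fin EP])
    finally show ?thesis .
  qed
  have "real (card G)^2 \<le> real (card (h ` G)) * real (card ?P)" by (rule cs)
  also have "\<dots> \<le> (real (card (config_classes R m E)) * real (card Tset)) * (\<Sum>g\<in>SL2 R. fE R E g ^ m)"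
    by (intro mult_mono c2) (use c1 in \<open>simp_all flip: of_nat_mult\<close>)
  finally show ?thesis by (simp add: mult_ac)
qed




definition frm :: "('a, 'b) ring_scheme \<Rightarrow> 'a \<times> 'a \<Rightarrow> 'a \<times> 'a \<Rightarrow> 'a \<times> 'a \<Rightarrow> 'a \<times> 'a \<Rightarrow> 'a mat2" where
  "frm R a w b w' =
    ((fst b \<otimes>\<^bsub>R\<^esub> snd w \<ominus>\<^bsub>R\<^esub> fst w' \<otimes>\<^bsub>R\<^esub> snd a, fst w' \<otimes>\<^bsub>R\<^esub> fst a \<ominus>\<^bsub>R\<^esub> fst b \<otimes>\<^bsub>R\<^esub> fst w),
     (snd b \<otimes>\<^bsub>R\<^esub> snd w \<ominus>\<^bsub>R\<^esub> snd w' \<otimes>\<^bsub>R\<^esub> snd a, snd w' \<otimes>\<^bsub>R\<^esub> fst a \<ominus>\<^bsub>R\<^esub> snd b \<otimes>\<^bsub>R\<^esub> fst w))"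

definition smul :: "('a, 'b) ring_scheme \<Rightarrow> 'a \<Rightarrow> 'a \<times> 'a \<Rightarrow> 'a \<times> 'a" where
  "smul R s x = (s \<otimes>\<^bsub>R\<^esub> fst x, s \<otimes>\<^bsub>R\<^esub> snd x)"

context cring begin

lemma dp_closed: "x \<in> plane R \<Longrightarrow> y \<in> plane R \<Longrightarrow> dot_perp R x y \<in> carrier R"
  by (auto simp: dot_perp_def plane_def)

lemma smul_plane: "s \<in> carrier R \<Longrightarrow> x \<in> plane R \<Longrightarrow> smul R s x \<in> plane R"
  by (auto simp: smul_def plane_def)

lemma dp_smul_left: "s \<in> carrier R \<Longrightarrow> x \<in> plane R \<Longrightarrow> z \<in> plane R \<Longrightarrow>
   dot_perp R (smul R s x) z = s \<otimes> dot_perp R x z"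
  by (cases x, cases z) (simp add: smul_def dot_perp_def plane_def, algebra)

lemma dp_smul_right: "s \<in> carrier R \<Longrightarrow> x \<in> plane R \<Longrightarrow> z \<in> plane R \<Longrightarrow>
   dot_perp R z (smul R s x) = s \<otimes> dot_perp R z x"
  by (cases x, cases z) (simp add: smul_def dot_perp_def plane_def, algebra)

lemma mat_act_plane: "g \<in> SL2 R \<Longrightarrow> x \<in> plane R \<Longrightarrow> mat_act R g x \<in> plane R"
  by (cases x) (auto simp: SL2_def mat_act_def plane_def)

lemma frame_act:
  assumes "a \<in> plane R" "w \<in> plane R" "b \<in> plane R" "w' \<in> plane R" "z \<in> plane R"
  shows "mat_act R (frm R a w b w') z =
    (dot_perp R z w \<otimes> fst b \<oplus> dot_perp R a z \<otimes> fst w', dot_perp R z w \<otimes> snd b \<oplus> dot_perp R a z \<otimes> snd w')"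
  using assms
  by (cases a, cases w, cases b, cases w', cases z) (simp add: frm_def mat_act_def dot_perp_def plane_def, algebra)

lemma frame_SL2:
  assumes "a \<in> plane R" "w \<in> plane R" "b \<in> plane R" "w' \<in> plane R"
    and "dot_perp R a w = \<one>" "dot_perp R b w' = \<one>"
  shows "frm R a w b w' \<in> SL2 R"
proof -
  obtain a1 a2 w1 w2 b1 b2 v1 v2 where e: "a = (a1,a2)" "w = (w1,w2)" "b = (b1,b2)" "w' = (v1,v2)"
    by (cases a, cases w, cases b, cases w') auto
  have c: "a1 \<in> carrier R" "a2 \<in> carrier R" "w1 \<in> carrier R" "w2 \<in> carrier R"
     "b1 \<in> carrier R" "b2 \<in> carrier R" "v1 \<in> carrier R" "v2 \<in> carrier R"
    using assms(1-4) e by (auto simp: plane_def)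
  have h1: "a1 \<otimes> w2 \<ominus> a2 \<otimes> w1 = \<one>" "b1 \<otimes> v2 \<ominus> b2 \<otimes> v1 = \<one>"
    using assms(5,6) e by (auto simp: dot_perp_def)
  have "(b1 \<otimes> w2 \<ominus> v1 \<otimes> a2) \<otimes> (v2 \<otimes> a1 \<ominus> b2 \<otimes> w1) \<ominus> (v1 \<otimes> a1 \<ominus> b1 \<otimes> w1) \<otimes> (b2 \<otimes> w2 \<ominus> v2 \<otimes> a2)
      = (b1 \<otimes> v2 \<ominus> b2 \<otimes> v1) \<otimes> (a1 \<otimes> w2 \<ominus> a2 \<otimes> w1)"
    using c by algebra
  also have "\<dots> = \<one>" using h1 by simp
  finally show ?thesis using c e unfolding frm_def SL2_def by auto
qed

lemma decomp:
  assumes "a \<in> plane R" "w \<in> plane R" "z \<in> plane R" "dot_perp R a w = \<one>"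
  shows "z = (dot_perp R z w \<otimes> fst a \<oplus> dot_perp R a z \<otimes> fst w, dot_perp R z w \<otimes> snd a \<oplus> dot_perp R a z \<otimes> snd w)"
proof -
  obtain a1 a2 w1 w2 z1 z2 where e: "a = (a1,a2)" "w = (w1,w2)" "z = (z1,z2)"
    by (cases a, cases w, cases z) auto
  have c: "a1 \<in> carrier R" "a2 \<in> carrier R" "w1 \<in> carrier R" "w2 \<in> carrier R"
     "z1 \<in> carrier R" "z2 \<in> carrier R"
    using assms(1-3) e by (auto simp: plane_def)
  have h1: "a1 \<otimes> w2 \<ominus> a2 \<otimes> w1 = \<one>" using assms(4) e by (auto simp: dot_perp_def)
  have "z1 = z1 \<otimes> (a1 \<otimes> w2 \<ominus> a2 \<otimes> w1)" using h1 c by simp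
  also have "\<dots> = (z1 \<otimes> w2 \<ominus> z2 \<otimes> w1) \<otimes> a1 \<oplus> (a1 \<otimes> z2 \<ominus> a2 \<otimes> z1) \<otimes> w1" using c by algebra
  finally have 1: "z1 = (z1 \<otimes> w2 \<ominus> z2 \<otimes> w1) \<otimes> a1 \<oplus> (a1 \<otimes> z2 \<ominus> a2 \<otimes> z1) \<otimes> w1" .
  have "z2 = z2 \<otimes> (a1 \<otimes> w2 \<ominus> a2 \<otimes> w1)" using h1 c by simp
  also have "\<dots> = (z1 \<otimes> w2 \<ominus> z2 \<otimes> w1) \<otimes> a2 \<oplus> (a1 \<otimes> z2 \<ominus> a2 \<otimes> z1) \<otimes> w2" using c by algebra
  finally have 2: "z2 = (z1 \<otimes> w2 \<ominus> z2 \<otimes> w1) \<otimes> a2 \<oplus> (a1 \<otimes> z2 \<ominus> a2 \<otimes> z1) \<otimes> w2" .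
  show ?thesis using 1 2 e by (simp add: dot_perp_def)
qed

lemma dp_expand:
  assumes "a \<in> plane R" "w \<in> plane R" "z \<in> plane R" "y \<in> plane R" "dot_perp R a w = \<one>"
  shows "dot_perp R z y = dot_perp R z w \<otimes> dot_perp R a y \<ominus> dot_perp R a z \<otimes> dot_perp R y w"
proof -
  obtain a1 a2 w1 w2 z1 z2 y1 y2 where e: "a = (a1,a2)" "w = (w1,w2)" "z = (z1,z2)" "y = (y1,y2)"
    by (cases a, cases w, cases z, cases y) auto
  have c: "a1 \<in> carrier R" "a2 \<in> carrier R" "w1 \<in> carrier R" "w2 \<in> carrier R"
     "z1 \<in> carrier R" "z2 \<in> carrier R" "y1 \<in> carrier R" "y2 \<in> carrier R"
    using assms(1-4) e by (auto simp: plane_def)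
  have h1: "a1 \<otimes> w2 \<ominus> a2 \<otimes> w1 = \<one>" using assms(5) e by (auto simp: dot_perp_def)
  have "z1 \<otimes> y2 \<ominus> z2 \<otimes> y1 = (z1 \<otimes> y2 \<ominus> z2 \<otimes> y1) \<otimes> (a1 \<otimes> w2 \<ominus> a2 \<otimes> w1)" using h1 c by simp
  also have "\<dots> = (z1 \<otimes> w2 \<ominus> z2 \<otimes> w1) \<otimes> (a1 \<otimes> y2 \<ominus> a2 \<otimes> y1) \<ominus> (a1 \<otimes> z2 \<ominus> a2 \<otimes> z1) \<otimes> (y1 \<otimes> w2 \<ominus> y2 \<otimes> w1)"
    using c by algebra
  finally show ?thesis using e by (simp add: dot_perp_def)
qed

lemma FRAME:
  assumes "a \<in> plane R" "w \<in> plane R" "b \<in> plane R" "w' \<in> plane R"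
    and "dot_perp R a w = \<one>" "dot_perp R b w' = \<one>"
    and "set xs \<subseteq> plane R" "set ys \<subseteq> plane R" "length xs = length ys"
    and "\<And>i. i < length xs \<Longrightarrow> dot_perp R (xs!i) w = dot_perp R (ys!i) w' \<and> dot_perp R a (xs!i) = dot_perp R b (ys!i)"
  shows "\<exists>g\<in>SL2 R. map (mat_act R g) xs = ys"
proof (intro bexI)
  show "frm R a w b w' \<in> SL2 R" using frame_SL2 assms(1-6) .
  show "map (mat_act R (frm R a w b w')) xs = ys"
  proof (rule nth_equalityI)
    show "length (map (mat_act R (frm R a w b w')) xs) = length ys" using assms(9) by simp
    fix i assume "i < length (map (mat_act R (frm R a w b w')) xs)"
    then have i: "i < length xs" by simp
    have xi: "xs!i \<in> plane R" using assms(7) i by auto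
    have yi: "ys!i \<in> plane R" using assms(8,9) i by auto
    have "map (mat_act R (frm R a w b w')) xs ! i = mat_act R (frm R a w b w') (xs!i)" using i by simp
    also have "\<dots> = (dot_perp R (ys!i) w' \<otimes> fst b \<oplus> dot_perp R b (ys!i) \<otimes> fst w',
         dot_perp R (ys!i) w' \<otimes> snd b \<oplus> dot_perp R b (ys!i) \<otimes> snd w')"
      using frame_act[OF assms(1-4) xi] assms(10)[OF i] by simp
    also have "\<dots> = ys!i" using decomp[OF assms(3,4) yi assms(6)] by simp
    finally show "map (mat_act R (frm R a w b w')) xs ! i = ys ! i" .
  qed
qed

end



lemma list2: "length x \<ge> 2 \<Longrightarrow> x = x!0 # x!1 # drop 2 x"
  by (cases x; cases "tl x") auto

context cring begin

lemma unit_solve: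
  assumes "u \<in> Units R" "b \<in> carrier R" "c \<in> carrier R"
  shows "b = inv u \<otimes> (u \<otimes> b \<ominus> c \<oplus> c)"
proof -
  have iu: "inv u \<in> carrier R" "inv u \<otimes> u = \<one>" "u \<in> carrier R" using assms(1) by auto
  have "inv u \<otimes> (u \<otimes> b \<ominus> c \<oplus> c) = (inv u \<otimes> u) \<otimes> b" using iu assms by algebra
  then show ?thesis using iu assms by simp
qed

lemma line_count:
  assumes fin: "finite (carrier R)" and a: "a \<in> plane R" and u: "fst a \<in> Units R \<or> snd a \<in> Units R"
  shows "card {b\<in>plane R. dot_perp R a b \<in> S} \<le> card (carrier R) * card (carrier R \<inter> S)"
proof -
  obtain a1 a2 where e: "a = (a1,a2)" by (cases a)
  have c: "a1 \<in> carrier R" "a2 \<in> carrier R" using a e by (auto simp: plane_def)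
  let ?B = "{b\<in>plane R. dot_perp R a b \<in> S}"
  define F where "F b = (if a1 \<in> Units R then (fst b, dot_perp R a b) else (snd b, dot_perp R a b))" for b
  have "inj_on F ?B"
  proof (rule inj_onI)
    fix b b' assume bb: "b \<in> ?B" "b' \<in> ?B" "F b = F b'"
    obtain b1 b2 b1' b2' where eb: "b = (b1,b2)" "b' = (b1',b2')" by (cases b, cases b')
    have cb: "b1 \<in> carrier R" "b2 \<in> carrier R" "b1' \<in> carrier R" "b2' \<in> carrier R"
      using bb eb by (auto simp: plane_def)
    show "b = b'"
    proof (cases "a1 \<in> Units R")
      case True
      then have 1: "b1 = b1'" and 2: "a1 \<otimes> b2 \<ominus> a2 \<otimes> b1 = a1 \<otimes> b2' \<ominus> a2 \<otimes> b1"
        using bb(3) eb e by (auto simp: F_def dot_perp_def)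
      have "b2 = inv a1 \<otimes> (a1 \<otimes> b2 \<ominus> a2 \<otimes> b1 \<oplus> a2 \<otimes> b1)" using unit_solve True cb c by simp
      also have "\<dots> = inv a1 \<otimes> (a1 \<otimes> b2' \<ominus> a2 \<otimes> b1 \<oplus> a2 \<otimes> b1)" using 2 by simp
      also have "\<dots> = b2'" using unit_solve[symmetric] True cb c by simp
      finally show ?thesis using 1 eb by simp
    next
      case False
      then have u2: "a2 \<in> Units R" using u e by simp
      have 1: "b2 = b2'" and 2: "a1 \<otimes> b2 \<ominus> a2 \<otimes> b1 = a1 \<otimes> b2 \<ominus> a2 \<otimes> b1'"
        using bb(3) eb e False by (auto simp: F_def dot_perp_def)
      have "b1 = inv a2 \<otimes> (a2 \<otimes> b1 \<ominus> a1 \<otimes> b2 \<oplus> a1 \<otimes> b2)" using unit_solve u2 cb c by simp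
      also have "a2 \<otimes> b1 \<ominus> a1 \<otimes> b2 = \<ominus> (a1 \<otimes> b2 \<ominus> a2 \<otimes> b1)" using cb c by algebra
      also have "\<dots> = \<ominus> (a1 \<otimes> b2 \<ominus> a2 \<otimes> b1')" using 2 by simp
      also have "\<dots> = a2 \<otimes> b1' \<ominus> a1 \<otimes> b2" using cb c by algebra
      also have "inv a2 \<otimes> (a2 \<otimes> b1' \<ominus> a1 \<otimes> b2 \<oplus> a1 \<otimes> b2) = b1'" using unit_solve[symmetric] u2 cb c by simp
      finally show ?thesis using 1 eb by simp
    qed
  qed
  moreover have "F ` ?B \<subseteq> carrier R \<times> (carrier R \<inter> S)"
    using a dp_closed by (auto simp: F_def plane_def)
  ultimately have "card ?B \<le> card (carrier R \<times> (carrier R \<inter> S))"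
    by (rule card_inj_on_le) (use fin in auto)
  then show ?thesis by (simp add: card_cartesian_product)
qed

lemma bad_bound:
  assumes fin: "finite (carrier R)" and EP: "E \<subseteq> plane R"
  shows "card {p\<in>E\<times>E. dot_perp R (fst p) (snd p) \<notin> Units R}
     \<le> card E * card (carrier R) * card (carrier R - Units R) + card (carrier R - Units R)^2 * card (carrier R)^2"
proof -
  let ?N = "card (carrier R)" let ?n = "card (carrier R - Units R)"
  have fE: "finite E" using EP finite_plane[OF fin] finite_subset by blast
  define E1 where "E1 = {a\<in>E. fst a \<in> Units R \<or> snd a \<in> Units R}"
  define E2 where "E2 = {a\<in>E. \<not> (fst a \<in> Units R \<or> snd a \<in> Units R)}"
  let ?bad = "{p\<in>E\<times>E. dot_perp R (fst p) (snd p) \<notin> Units R}"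
  have beq: "?bad = (SIGMA a:E1. {b\<in>E. dot_perp R a b \<notin> Units R}) \<union> (SIGMA a:E2. {b\<in>E. dot_perp R a b \<notin> Units R})"
    unfolding E1_def E2_def by auto
  have "card ?bad \<le> card (SIGMA a:E1. {b\<in>E. dot_perp R a b \<notin> Units R}) + card (SIGMA a:E2. {b\<in>E. dot_perp R a b \<notin> Units R})"
    unfolding beq by (rule card_Un_le)
  also have "card (SIGMA a:E1. {b\<in>E. dot_perp R a b \<notin> Units R}) = (\<Sum>a\<in>E1. card {b\<in>E. dot_perp R a b \<notin> Units R})"
    using fE by (simp add: E1_def)
  also have "\<dots> \<le> (\<Sum>a\<in>E1. ?N * ?n)"
  proof (rule sum_mono)
    fix a assume a: "a \<in> E1"
    have "card {b\<in>E. dot_perp R a b \<notin> Units R} \<le> card {b\<in>plane R. dot_perp R a b \<notin> Units R}"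
      using EP finite_plane[OF fin] by (intro card_mono) auto
    also have "\<dots> \<le> ?N * ?n" using a EP line_count[OF fin, of a "- Units R"] unfolding E1_def by (auto simp: Diff_eq)
    finally show "card {b\<in>E. dot_perp R a b \<notin> Units R} \<le> ?N * ?n" .
  qed
  also have "(\<Sum>a\<in>E1. ?N * ?n) \<le> card E * ?N * ?n"
    using card_mono[OF fE, of E1] by (simp add: E1_def)
  also have "card (SIGMA a:E2. {b\<in>E. dot_perp R a b \<notin> Units R}) \<le> card (E2 \<times> plane R)"
    using EP fE finite_plane[OF fin] by (intro card_mono) (auto simp: E2_def)
  also have "\<dots> = card E2 * ?N^2" by (simp add: card_cartesian_product plane_def power2_eq_square)
  also have "card E2 \<le> ?n^2"
  proof -
    have "E2 \<subseteq> (carrier R - Units R) \<times> (carrier R - Units R)" using EP by (auto simp: E2_def plane_def)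
    then have "card E2 \<le> card ((carrier R - Units R) \<times> (carrier R - Units R))"
      using fin by (intro card_mono) auto
    then show ?thesis by (simp add: card_cartesian_product power2_eq_square)
  qed
  finally show ?thesis by (simp add: mult_right_mono) 
qed

lemma SMALL:
  assumes fin: "finite (carrier R)" and EP: "E \<subseteq> plane R" and ne: "E \<noteq> {}"
  shows "real (card E) ^ (2*m) \<le> real (card (carrier R)) ^ (2*m) * real (card (config_classes R m E)) * (\<Sum>g\<in>SL2 R. fE R E g ^ m)"
proof -
  have fE: "finite E" using EP finite_plane[OF fin] finite_subset by blast
  obtain e where e: "e \<in> E" using ne by auto
  have "replicate m e \<in> tuples m E" using e by (auto simp: tuples_def)
  then have "config_classes R m E \<noteq> {}" by (auto simp: config_classes_def)
  moreover have "finite (config_classes R m E)"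
  proof -
    have "tuples m E // tuple_equiv R m E = (\<lambda>x. tuple_equiv R m E `` {x}) ` tuples m E"
      by (auto simp: quotient_def)
    then show ?thesis using finite_tuples[OF fE] by (simp add: config_classes_def)
  qed
  ultimately have K: "1 \<le> real (card (config_classes R m E))"
    by (simp add: Suc_leI card_gt_0_iff)
  define idm where "idm = ((\<one>, \<zero>), (\<zero>, \<one>))"
  have idS: "idm \<in> SL2 R" by (simp add: idm_def SL2_def minus_eq)
  have "mat_act R idm x = x" if "x \<in> plane R" for x using that
    by (cases x) (simp add: idm_def mat_act_def plane_def)
  then have "{x\<in>E. mat_act R idm x \<in> E} = E" using EP by auto
  then have fid: "fE R E idm = real (card E)" using fE_card[OF fin EP] by simp
  have nn: "\<And>g. 0 \<le> fE R E g" unfolding fE_def by (intro sum_nonneg) auto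
  have S: "real (card E) ^ m \<le> (\<Sum>g\<in>SL2 R. fE R E g ^ m)"
    using member_le_sum[OF idS, of "\<lambda>g. fE R E g ^ m"] finite_SL2[OF fin] nn fid by simp
  have "card E \<le> card (plane R)" using EP finite_plane[OF fin] by (simp add: card_mono)
  then have ME: "real (card E) \<le> real (card (carrier R))^2"
    by (simp add: plane_def card_cartesian_product power2_eq_square flip: of_nat_mult)
  have "real (card E) ^ (2*m) = real (card E)^m * real (card E)^m" by (simp add: power_add[symmetric] mult_2)
  also have "\<dots> \<le> real (card (carrier R)) ^ (2*m) * (real (card (config_classes R m E)) * (\<Sum>g\<in>SL2 R. fE R E g ^ m))"
  proof (rule mult_mono)
    show "real (card E)^m \<le> real (card (carrier R)) ^ (2*m)"
      using power_mono[OF ME, of m] by (simp add: power_mult)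
    show "real (card E)^m \<le> real (card (config_classes R m E)) * (\<Sum>g\<in>SL2 R. fE R E g ^ m)"
    proof -
      have Sn: "0 \<le> (\<Sum>g\<in>SL2 R. fE R E g ^ m)" using nn by (intro sum_nonneg) simp
      show ?thesis using mult_right_mono[OF K Sn] S by simp
    qed
  qed auto
  finally show ?thesis by (simp add: mult_ac)
qed

lemma UNIT:
  assumes fin: "finite (carrier R)" and EP: "E \<subseteq> plane R" and m: "m \<ge> 2"
    and bad: "2 * real (card {p\<in>E\<times>E. dot_perp R (fst p) (snd p) \<notin> Units R}) \<le> real (card E)^2"
  shows "real (card E) ^ (2*m) \<le> 4 * real (card (config_classes R m E)) * (\<Sum>g\<in>SL2 R. fE R E g ^ m)"
proof -
  have fE: "finite E" using EP finite_plane[OF fin] finite_subset by blast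
  let ?T = "tuples m E"
  define G where "G = {x\<in>?T. dot_perp R (x!0) (x!1) \<in> Units R}"
  let ?bad = "{p\<in>E\<times>E. dot_perp R (fst p) (snd p) \<notin> Units R}"
  have H: "\<exists>g\<in>SL2 R. map (mat_act R g) x = y"
    if xy: "x\<in>G" "y\<in>G" "(x,y) \<in> tuple_equiv R m E" for x y
  proof -
    have lx: "length x = m" "set x \<subseteq> E" and ly: "length y = m" "set y \<subseteq> E"
      using xy G_def by (auto simp: tuples_def)
    have eq: "\<And>i j. i < m \<Longrightarrow> j < m \<Longrightarrow> dot_perp R (x!i) (x!j) = dot_perp R (y!i) (y!j)"
      using xy(3) by (auto simp: tuple_equiv_def)
    have pl: "\<And>i. i < m \<Longrightarrow> x!i \<in> plane R \<and> y!i \<in> plane R"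
    proof -
      fix i assume "i < m"
      then have "x!i \<in> set x" "y!i \<in> set y" using lx ly by auto
      then show "x!i \<in> plane R \<and> y!i \<in> plane R" using lx ly EP by auto
    qed
    define d where "d = dot_perp R (x!0) (x!1)"
    have du: "d \<in> Units R" using xy(1) by (simp add: G_def d_def)
    have dy: "dot_perp R (y!0) (y!1) = d" using eq[of 0 1] m by (simp add: d_def)
    define e where "e = inv d"
    have ec: "e \<in> carrier R" "e \<otimes> d = \<one>" using du by (auto simp: e_def)
    have p0: "x!0 \<in> plane R" "y!0 \<in> plane R" "x!1 \<in> plane R" "y!1 \<in> plane R" using pl m by auto
    show ?thesis
    proof (rule FRAME[of "x!0" "smul R e (x!1)" "y!0" "smul R e (y!1)"])
      show "x!0 \<in> plane R" "y!0 \<in> plane R" using p0 by auto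
      show "smul R e (x!1) \<in> plane R" "smul R e (y!1) \<in> plane R" using p0 ec smul_plane by auto
      show "dot_perp R (x!0) (smul R e (x!1)) = \<one>" using dp_smul_right ec p0 by (simp add: d_def)
      show "dot_perp R (y!0) (smul R e (y!1)) = \<one>" using dp_smul_right ec p0 dy by simp
      show "set x \<subseteq> plane R" "set y \<subseteq> plane R" using lx ly EP by auto
      show "length x = length y" using lx ly by simp
      fix i assume i: "i < length x"
      then have im: "i < m" using lx by simp
      show "dot_perp R (x!i) (smul R e (x!1)) = dot_perp R (y!i) (smul R e (y!1)) \<and>
            dot_perp R (x!0) (x!i) = dot_perp R (y!0) (y!i)"
        using dp_smul_right ec p0 pl[OF im] eq[OF im, of 1] eq[OF _ im, of 0] m by auto
    qed
  qed
  have GT: "G \<subseteq> ?T" by (auto simp: G_def)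
  have gen: "real (card G)^2 \<le> real (card {()}) * real (card (config_classes R m E)) * (\<Sum>g\<in>SL2 R. fE R E g ^ m)"
    by (rule GEN[OF fin EP GT, of "\<lambda>_. ()"]) (use H in auto)
  have fT: "finite ?T" using finite_tuples[OF fE] .
  define F where "F x = ((x!0, x!1), drop 2 x)" for x :: "('a \<times> 'a) list"
  have "inj_on F (?T - G)"
  proof (rule inj_onI)
    fix x y assume xy: "x \<in> ?T - G" "y \<in> ?T - G" "F x = F y"
    have "length x = m" "length y = m" using xy by (auto simp: tuples_def)
    then have xs: "x = x!0 # x!1 # drop 2 x" and ys: "y = y!0 # y!1 # drop 2 y" using m list2[of x] list2[of y] by auto
    have eqs: "x!0 = y!0" "x!1 = y!1" "drop 2 x = drop 2 y" using xy(3) by (simp_all add: F_def)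
    show "x = y" by (subst xs, subst ys) (simp only: eqs)
  qed
  moreover have "F ` (?T - G) \<subseteq> ?bad \<times> tuples (m-2) E"
  proof
    fix q assume "q \<in> F ` (?T - G)"
    then obtain x where x: "x \<in> ?T" "x \<notin> G" "q = F x" by auto
    have "length x = m" "set x \<subseteq> E" using x by (auto simp: tuples_def)
    then have "x!0 \<in> set x" "x!1 \<in> set x" "set (drop 2 x) \<subseteq> set x" using m
      by (auto dest: in_set_dropD)
    then have "x!0 \<in> E" "x!1 \<in> E" "set (drop 2 x) \<subseteq> E" using \<open>set x \<subseteq> E\<close> by auto
    then show "q \<in> ?bad \<times> tuples (m-2) E" using x \<open>length x = m\<close>
      by (auto simp: F_def G_def tuples_def)
  qed
  ultimately have "card (?T - G) \<le> card (?bad \<times> tuples (m-2) E)"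
    by (rule card_inj_on_le) (use fE finite_tuples[OF fE] in auto)
  also have "\<dots> = card ?bad * card E ^ (m-2)"
    by (simp add: card_cartesian_product card_tuples[OF fE])
  finally have c1: "card (?T - G) \<le> card ?bad * card E ^ (m-2)" .
  have "card ?T = card G + card (?T - G)" using fT GT
    using card_Diff_subset[OF finite_subset[OF GT fT] GT] card_mono[OF fT GT] by linarith
  then have "real (card E)^m \<le> real (card G) + real (card ?bad) * real (card E)^(m-2)"
    using c1 card_tuples[OF fE, of m] by (simp flip: of_nat_mult of_nat_power of_nat_add)
  also have "real (card ?bad) * real (card E)^(m-2) \<le> real (card E)^2 / 2 * real (card E)^(m-2)"
    using bad by (intro mult_right_mono) auto
  also have "real (card E)^2 / 2 * real (card E)^(m-2) = real (card E)^m / 2"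
  proof -
    have e: "2 + (m-2) = m" using m by simp
    have pe: "real (card E)^2 * real (card E)^(m-2) = real (card E)^m" by (metis power_add e)
    show ?thesis by (subst pe[symmetric]) simp
  qed
  finally have "real (card E)^m / 2 \<le> real (card G)" by simp
  then have "(real (card E)^m / 2)^2 \<le> real (card G)^2" by (intro power_mono) auto
  then have "real (card E)^(2*m) \<le> 4 * real (card G)^2" by (simp add: power_mult power2_eq_square mult_ac)
  then show ?thesis using gen by simp
qed

end




definition cpt :: "int \<Rightarrow> nat \<Rightarrow> int \<times> int \<Rightarrow> int \<times> int" where
  "cpt p j z = (fst z div p^j, snd z div p^j)"

definition jj :: "int \<Rightarrow> int \<times> int \<Rightarrow> nat" where
  "jj p z = (LEAST j. \<not> (p^(Suc j) dvd fst z \<and> p^(Suc j) dvd snd z))"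

definition vv :: "int \<Rightarrow> int \<Rightarrow> nat" where
  "vv p n = (LEAST v. \<not> p^(Suc v) dvd n)"

lemma least_props:
  fixes P :: "nat \<Rightarrow> bool"
  assumes "P 0" "\<not> P V"
  shows "(LEAST j. \<not> P (Suc j)) < V \<and> P (LEAST j. \<not> P (Suc j)) \<and> \<not> P (Suc (LEAST j. \<not> P (Suc j)))"
proof -
  obtain V' where V: "V = Suc V'" using assms by (cases V) auto
  let ?n = "LEAST j. \<not> P (Suc j)"
  have 1: "\<not> P (Suc ?n)" by (rule LeastI[of _ V']) (use assms V in simp)
  have 2: "?n \<le> V'" by (rule Least_le) (use assms V in simp)
  have 3: "P ?n"
  proof (cases ?n)
    case 0 then show ?thesis using assms by simp
  next
    case (Suc k)
    then have "k < ?n" by simp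
    then have "\<not> \<not> P (Suc k)" by (rule not_less_Least)
    then show ?thesis using Suc by simp
  qed
  show ?thesis using 1 2 3 V by simp
qed

lemma jj_props:
  assumes "\<not> (p^V dvd fst z \<and> p^V dvd snd z)"
  shows "jj p z < V \<and> p^(jj p z) dvd fst z \<and> p^(jj p z) dvd snd z \<and> \<not> (p^(Suc (jj p z)) dvd fst z \<and> p^(Suc (jj p z)) dvd snd z)"
  using least_props[of "\<lambda>j. p^j dvd fst z \<and> p^j dvd snd z" V] assms unfolding jj_def by simp

lemma vv_props:
  assumes "\<not> p^V dvd n"
  shows "vv p n < V \<and> p^(vv p n) dvd n \<and> \<not> p^(Suc (vv p n)) dvd n"
  using least_props[of "\<lambda>j. p^j dvd n" V] assms unfolding vv_def by simp

lemma cpt_prim: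
  fixes p a b :: int
  assumes "p^j dvd a" "p^j dvd b" "\<not> (p^(Suc j) dvd a \<and> p^(Suc j) dvd b)"
  shows "\<not> (p dvd a div p^j \<and> p dvd b div p^j)"
proof
  assume h: "p dvd a div p^j \<and> p dvd b div p^j"
  have "a = p^j * (a div p^j)" using assms(1) by (rule dvd_mult_div_cancel[symmetric])
  have "b = p^j * (b div p^j)" using assms(2) by (rule dvd_mult_div_cancel[symmetric])
  then have "p^(Suc j) dvd a" "p^(Suc j) dvd b" using h \<open>a = _\<close>
    by (metis mult_dvd_mono dvd_refl power_Suc2 mult.commute)+
  then show False using assms(3) by blast
qed

lemma div_eq_from_dvd:
  fixes x y d :: int
  assumes "d dvd (x - y)" "x div d = y div d"
  shows "x = y"
proof -
  have "x mod d = y mod d" using assms(1) by (simp add: mod_eq_dvd_iff)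
  then show ?thesis using assms(2) by (metis div_mult_mod_eq)
qed

lemma dvd_cancel_val:
  fixes p :: int
  assumes pr: "prime p" and "p^v dvd b" "\<not> p^(Suc v) dvd b" "p^l dvd b * d" "v \<le> l"
  shows "p^(l - v) dvd d"
proof -
  obtain u where u: "b = p^v * u" using assms(2) by auto
  have nu: "\<not> p dvd u"
  proof
    assume "p dvd u" then have "p^(Suc v) dvd b" using u by (simp add: mult_dvd_mono)
    then show False using assms(3) by simp
  qed
  have "p^v * p^(l-v) dvd p^v * (u * d)" using assms(4,5) u
    by (simp add: power_add[symmetric] mult.assoc)
  then have "p^(l-v) dvd u * d" using pr by (simp add: prime_gt_0_int)
  moreover have "coprime (p^(l-v)) u" using nu pr
    by (simp add: coprime_commute prime_imp_coprime)
  ultimately show ?thesis using coprime_dvd_mult_right_iff by blast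
qed

lemma div_range:
  fixes x d M :: int
  assumes "0 \<le> x" "x < M" "0 < d"
  shows "0 \<le> x div d \<and> x div d < M"
proof -
  have "x div d \<le> x div 1" using zdiv_mono2[of x 1 d] assms by simp
  then show ?thesis using assms by (simp add: pos_imp_zdiv_nonneg_iff)
qed

lemma div_lt:
  fixes z d q :: int
  assumes "0 < d" "0 \<le> z" "z < q * d"
  shows "z div d < q"
proof (rule ccontr)
  assume "\<not> z div d < q" then have "q \<le> z div d" by simp
  then have "q * d \<le> (z div d) * d" using mult_right_mono assms(1) by simp
  also have "(z div d) * d \<le> z"
  proof -
    have "z - z div d * d = z mod d" by (simp add: minus_div_mult_eq_mod)
    moreover have "z mod d \<ge> 0" using assms(1) by simp
    ultimately show ?thesis by linarith
  qed
  finally show False using assms(3) by simp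
qed

context residues begin

lemma in_carrier: "z \<in> carrier R \<longleftrightarrow> 0 \<le> z \<and> z < m"
  by (auto simp: res_carrier_eq)

lemma res_minus: "x \<ominus> y = (x - y) mod m"
  by (simp add: a_minus_def res_add_eq res_neg_eq mod_add_right_eq)

lemma dp_res: "dot_perp R x y = (fst x * snd y - snd x * fst y) mod m"
  by (simp add: dot_perp_def res_minus res_mult_eq mod_diff_eq)

lemma unit_of_ndvd:
  assumes pr: "prime p" and mp: "m = p^l" and z: "z \<in> carrier R" and nd: "\<not> p dvd z"
  shows "z \<in> Units R"
proof -
  have "z \<noteq> 0" using nd by auto
  then have "0 < z" "z < m" using z by (auto simp: in_carrier)
  moreover have "coprime z m" using nd pr mp
    by (simp add: prime_imp_coprime coprime_commute)
  ultimately show ?thesis by (simp add: res_units_eq)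
qed

lemma nonunits_card:
  assumes pr: "prime p" and mp: "m = p^l" and l: "l \<ge> 1"
  shows "card (carrier R - Units R) \<le> nat p ^ (l - 1)"
proof -
  have p1: "p > 1" using pr prime_gt_1_int by blast
  have "carrier R - Units R \<subseteq> (\<lambda>t. p * t) ` {0..<p^(l-1)}"
  proof
    fix z assume z: "z \<in> carrier R - Units R"
    then have zc: "0 \<le> z" "z < p^l" using mp by (auto simp: in_carrier)
    have "p dvd z" using unit_of_ndvd[OF pr mp] z by auto
    then obtain t where t: "z = p * t" by auto
    have "0 \<le> t" using zc t p1 by (simp add: zero_le_mult_iff)
    moreover have "p * t < p * p^(l-1)" using zc t l by (metis One_nat_def Suc_pred le_less_trans less_le_trans power_Suc order_refl less_one not_less)
    then have "t < p^(l-1)" using p1 by simp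
    ultimately show "z \<in> (\<lambda>t. p * t) ` {0..<p^(l-1)}" using t by auto
  qed
  then have "card (carrier R - Units R) \<le> card ((\<lambda>t. p * t) ` {0..<p^(l-1)})"
    by (intro card_mono) auto
  also have "\<dots> \<le> card {0..<p^(l-1)}" by (rule card_image_le) simp
  also have "\<dots> = nat p ^ (l-1)" using p1 by (simp add: nat_power_eq)
  finally show ?thesis .
qed

end

context cring begin

lemma w0_exists:
  assumes a: "a \<in> plane R" and u: "fst a \<in> Units R \<or> snd a \<in> Units R"
  shows "\<exists>w\<in>plane R. dot_perp R a w = \<one>"
proof -
  obtain a1 a2 where e: "a = (a1,a2)" by (cases a)
  have c: "a1 \<in> carrier R" "a2 \<in> carrier R" using a e by (auto simp: plane_def)
  show ?thesis
  proof (cases "a1 \<in> Units R")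
    case True
    let ?i = "inv a1"
    have i: "?i \<in> carrier R" "a1 \<otimes> ?i = \<one>" using True by auto
    have "a1 \<otimes> ?i \<ominus> a2 \<otimes> \<zero> = a1 \<otimes> ?i" using i c by algebra
    then have "dot_perp R a (\<zero>, ?i) = \<one>" using e i by (simp add: dot_perp_def)
    then show ?thesis using i by (intro bexI[of _ "(\<zero>, ?i)"]) (auto simp: plane_def)
  next
    case False
    then have U: "a2 \<in> Units R" using u e by simp
    let ?i = "inv a2"
    have i: "?i \<in> carrier R" "a2 \<otimes> ?i = \<one>" using U by auto
    have "a1 \<otimes> \<zero> \<ominus> a2 \<otimes> (\<ominus> ?i) = a2 \<otimes> ?i" using i c by algebra
    then have "dot_perp R a (\<ominus> ?i, \<zero>) = \<one>" using e i by (simp add: dot_perp_def)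
    then show ?thesis using i by (intro bexI[of _ "(\<ominus> ?i, \<zero>)"]) (auto simp: plane_def)
  qed
qed

lemma dp_shift:
  assumes "a \<in> plane R" "w \<in> plane R" "z \<in> plane R" "t \<in> carrier R"
  shows "dot_perp R z (fst w \<oplus> t \<otimes> fst a, snd w \<oplus> t \<otimes> snd a) = dot_perp R z w \<oplus> t \<otimes> dot_perp R z a"
  using assms by (cases a, cases w, cases z) (simp add: dot_perp_def plane_def, algebra)

lemma dp_self: "a \<in> plane R \<Longrightarrow> dot_perp R a a = \<zero>"
  by (cases a) (simp add: dot_perp_def plane_def, algebra)

lemma dp_anti: "a \<in> plane R \<Longrightarrow> z \<in> plane R \<Longrightarrow> dot_perp R z a = \<ominus> dot_perp R a z"
  by (cases a, cases z) (simp add: dot_perp_def plane_def, algebra)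

end

context residues begin

lemma wex:
  assumes pr: "prime p" and mp: "m = p^l" and vl: "v < l"
    and a: "a \<in> plane R" and prim: "\<not> (p dvd fst a \<and> p dvd snd a)" and z: "z \<in> plane R"
    and d1: "p^v dvd dot_perp R a z" and d2: "\<not> p^(Suc v) dvd dot_perp R a z"
  shows "\<exists>w\<in>plane R. dot_perp R a w = \<one> \<and> dot_perp R z w < p^v"
proof -
  have p1: "p > 1" using pr prime_gt_1_int by blast
  have pvpos: "p^v > 0" using p1 by simp
  have pvm: "p^v < m" using mp vl p1 by (simp add: power_strict_increasing)
  let ?b = "dot_perp R a z"
  have bc: "?b \<in> carrier R" using dp_closed a z by simp
  define u where "u = ?b div p^v"
  have bu: "?b = p^v * u" using d1 by (simp add: u_def dvd_mult_div_cancel)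
  have nu: "\<not> p dvd u"
  proof
    assume "p dvd u" then have "p^(Suc v) dvd ?b" using bu by (simp add: mult_dvd_mono)
    then show False using d2 by simp
  qed
  have "0 \<le> ?b" "?b < m" using bc by (auto simp: in_carrier)
  then have uc: "u \<in> carrier R" using div_range[of ?b m "p^v"] pvpos
    by (auto simp: in_carrier u_def)
  have uU: "u \<in> Units R" by (rule unit_of_ndvd[OF pr mp uc nu])
  have primU: "fst a \<in> Units R \<or> snd a \<in> Units R"
    using prim a unit_of_ndvd[OF pr mp] by (auto simp: plane_def)
  obtain w0 where w0: "w0 \<in> plane R" "dot_perp R a w0 = \<one>" using w0_exists[OF a primU] by blast
  define al where "al = dot_perp R z w0"
  have alc: "0 \<le> al" "al < m" using dp_closed[OF z w0(1)] by (auto simp: al_def in_carrier)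
  define q where "q = al div p^v"
  have qc: "q \<in> carrier R" using alc pvpos div_range[of al m "p^v"]
    by (auto simp: in_carrier q_def)
  define iu where "iu = inv u"
  have iu: "iu \<in> carrier R" "iu \<otimes> u = \<one>" using uU by (auto simp: iu_def)
  define t where "t = q \<otimes> iu"
  have tc: "t \<in> carrier R" using qc iu by (simp add: t_def)
  define w where "w = (fst w0 \<oplus> t \<otimes> fst a, snd w0 \<oplus> t \<otimes> snd a)"
  have wp: "w \<in> plane R" using w0 a tc by (auto simp: w_def plane_def)
  have "dot_perp R a w = dot_perp R a w0 \<oplus> t \<otimes> dot_perp R a a"
    unfolding w_def by (rule dp_shift[OF a w0(1) a tc])
  then have 1: "dot_perp R a w = \<one>" using w0 dp_self[OF a] tc by simp
  have pvc: "p^v \<in> carrier R" using pvpos pvm by (simp add: in_carrier)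
  have b2: "?b = p^v \<otimes> u" using bu \<open>0 \<le> ?b\<close> \<open>?b < m\<close> by (simp add: res_mult_eq)
  have "dot_perp R z w = al \<oplus> t \<otimes> dot_perp R z a"
    unfolding w_def al_def by (rule dp_shift[OF a w0(1) z tc])
  also have "dot_perp R z a = \<ominus> (p^v \<otimes> u)" using dp_anti[OF a z] b2 by simp
  also have "t \<otimes> \<ominus> (p^v \<otimes> u) = \<ominus> (q \<otimes> p^v \<otimes> (iu \<otimes> u))"
    unfolding t_def using qc iu(1) pvc uc by algebra
  also have "\<dots> = \<ominus> (q \<otimes> p^v)" using iu qc pvc by simp
  also have "al \<oplus> \<ominus> (q \<otimes> p^v) = al \<ominus> (q \<otimes> p^v)" by (simp add: a_minus_def)
  also have "\<dots> = (al - (q * p^v) mod m) mod m" by (simp add: res_minus res_mult_eq)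
  also have "\<dots> = (al - q * p^v) mod m" by (simp add: mod_diff_right_eq)
  also have "al - q * p^v = al mod p^v" by (simp add: q_def minus_div_mult_eq_mod)
  also have "(al mod p^v) mod m = al mod p^v"
  proof -
    have "0 \<le> al mod p^v" "al mod p^v < p^v" using pvpos by simp_all
    then show ?thesis using pvm by (intro mod_pos_pos_trivial) auto
  qed
  finally have 2: "dot_perp R z w < p^v" using pvpos by simp
  show ?thesis using wp 1 2 by blast
qed

end

definition ax :: "int \<Rightarrow> (int \<times> int) list \<Rightarrow> int \<times> int" where
  "ax p x = cpt p (jj p (x!0)) (x!0)"

definition Gset :: "int ring \<Rightarrow> int \<Rightarrow> nat \<Rightarrow> nat \<Rightarrow> nat \<Rightarrow> nat \<Rightarrow> (int \<times> int) set \<Rightarrow> (int \<times> int) list set" where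
  "Gset R p V j v n E = {x\<in>tuples n E. \<not> (p^V dvd fst (x!0) \<and> p^V dvd snd (x!0)) \<and>
      \<not> p^V dvd dot_perp R (ax p x) (x!1) \<and> jj p (x!0) = j \<and> vv p (dot_perp R (ax p x) (x!1)) = v}"

definition wx :: "int ring \<Rightarrow> int \<Rightarrow> nat \<Rightarrow> (int \<times> int) list \<Rightarrow> int \<times> int" where
  "wx R p v x = (SOME w. w \<in> plane R \<and> dot_perp R (ax p x) w = \<one>\<^bsub>R\<^esub> \<and> dot_perp R (x!1) w < p^v)"

definition tau :: "int ring \<Rightarrow> int \<Rightarrow> nat \<Rightarrow> nat \<Rightarrow> nat \<Rightarrow> (int \<times> int) list \<Rightarrow> int \<times> int list \<times> int list" where
  "tau R p l j v x = (dot_perp R (x!1) (wx R p v x),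
      map (\<lambda>z. dot_perp R z (wx R p v x) div p^(l-v)) x,
      map (\<lambda>z. dot_perp R (ax p x) z div p^(l-j)) x)"

definition Tset :: "int \<Rightarrow> nat \<Rightarrow> nat \<Rightarrow> nat \<Rightarrow> (int \<times> int list \<times> int list) set" where
  "Tset p j v n = {0..<p^v} \<times> {xs. set xs \<subseteq> {0..<p^v} \<and> length xs = n} \<times> {xs. set xs \<subseteq> {0..<p^j} \<and> length xs = n}"

lemma card_Tset:
  assumes "p > 0"
  shows "card (Tset p j v n) = nat (p^v) * nat (p^v)^n * nat (p^j)^n"
  using assms by (simp add: Tset_def card_cartesian_product card_lists_length_eq)

lemma finite_Tset: "finite (Tset p j v n)"
  by (simp add: Tset_def finite_lists_length_eq)

context residues begin

lemma minus_cancel_left: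
  assumes "c \<in> carrier R" "s \<in> carrier R" "t \<in> carrier R" "c \<ominus> s = c \<ominus> t"
  shows "s = t"
proof -
  have "s = c \<ominus> (c \<ominus> s)" using assms(1-3) by algebra
  also have "\<dots> = c \<ominus> (c \<ominus> t)" by (simp only: assms(4))
  also have "\<dots> = t" using assms(1-3) by algebra
  finally show ?thesis .
qed

lemma pow_not_dvd:
  fixes p :: int
  assumes "p > 1"
  shows "\<not> p^(Suc j) dvd p^j"
proof
  assume "p^(Suc j) dvd p^j"
  then have "p * p^j dvd 1 * p^j" by simp
  then have "p dvd 1" using assms by (subst (asm) dvd_times_right_cancel_iff) auto
  then show False using assms zdvd_imp_le[of p 1] by simp
qed

lemma mod_eq_dvd_cancel:
  assumes pr: "prime p" and mp: "m = p^l" and "v \<le> l" and "p^v dvd b" "\<not> p^(Suc v) dvd b"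
    and "(b * x) mod m = (b * y) mod m"
  shows "p^(l-v) dvd (x - y)"
proof -
  have "m dvd (b * x - b * y)" using assms(6) by (simp add: mod_eq_dvd_iff)
  then have "p^l dvd b * (x - y)" using mp by (simp add: right_diff_distrib)
  then show ?thesis using dvd_cancel_val[OF pr assms(4,5)] assms(3) by blast
qed

lemma G_facts:
  assumes pr: "prime p" and mp: "m = p^l" and Vl: "V \<le> l" and EP: "E \<subseteq> plane R" and n: "n \<ge> 2"
    and x: "x \<in> Gset R p V j v n E"
  shows "length x = n \<and> set x \<subseteq> plane R \<and> j < l \<and> v < l \<and> ax p x \<in> plane R
    \<and> smul R (p^j) (ax p x) = x!0 \<and> p^v dvd dot_perp R (ax p x) (x!1) \<and> \<not> p^(Suc v) dvd dot_perp R (ax p x) (x!1)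
    \<and> wx R p v x \<in> plane R \<and> dot_perp R (ax p x) (wx R p v x) = \<one> \<and> dot_perp R (x!1) (wx R p v x) < p^v
    \<and> p^j \<in> carrier R"
proof -
  have p1: "p > 1" using pr prime_gt_1_int by blast
  have lx: "length x = n" "set x \<subseteq> E" using x by (auto simp: Gset_def tuples_def)
  have sp: "set x \<subseteq> plane R" using lx EP by auto
  have "x!0 \<in> set x" "x!1 \<in> set x" using lx(1) n by auto
  then have x0: "x!0 \<in> plane R" "x!1 \<in> plane R" using sp by auto
  have c1: "\<not> (p^V dvd fst (x!0) \<and> p^V dvd snd (x!0))" "jj p (x!0) = j"
    and c2: "\<not> p^V dvd dot_perp R (ax p x) (x!1)" "vv p (dot_perp R (ax p x) (x!1)) = v"
    using x by (auto simp: Gset_def)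
  from jj_props[OF c1(1)] c1(2) have J: "j < V" "p^j dvd fst (x!0)" "p^j dvd snd (x!0)"
    "\<not> (p^(Suc j) dvd fst (x!0) \<and> p^(Suc j) dvd snd (x!0))" by auto
  from vv_props[OF c2(1)] c2(2) have W: "v < V" "p^v dvd dot_perp R (ax p x) (x!1)"
    "\<not> p^(Suc v) dvd dot_perp R (ax p x) (x!1)" by auto
  have axe: "ax p x = (fst (x!0) div p^j, snd (x!0) div p^j)" by (simp add: ax_def cpt_def c1(2))
  have x0r: "0 \<le> fst (x!0)" "fst (x!0) < m" "0 \<le> snd (x!0)" "snd (x!0) < m" using x0 by (auto simp: plane_def in_carrier)
  have pj: "p^j > 0" using p1 by simp
  have ap: "ax p x \<in> plane R" unfolding axe plane_def using x0r pj div_range by (auto simp: in_carrier)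
  have prim: "\<not> (p dvd fst (ax p x) \<and> p dvd snd (ax p x))" unfolding axe using cpt_prim[OF J(2,3,4)] by simp
  have pjm: "p^j < m" using mp J Vl p1 by (simp add: power_strict_increasing)
  have pjc: "p^j \<in> carrier R" using pj pjm by (simp add: in_carrier)
  have sm: "smul R (p^j) (ax p x) = x!0"
  proof -
    have "(p^j * (fst (x!0) div p^j)) mod m = fst (x!0)" using J(2) x0r by (simp add: dvd_mult_div_cancel)
    moreover have "(p^j * (snd (x!0) div p^j)) mod m = snd (x!0)" using J(3) x0r by (simp add: dvd_mult_div_cancel)
    ultimately show ?thesis unfolding axe smul_def by (simp add: res_mult_eq)
  qed
  have ex: "\<exists>w\<in>plane R. dot_perp R (ax p x) w = \<one> \<and> dot_perp R (x!1) w < p^v"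
    using wex[OF pr mp _ ap prim x0(2) W(2,3)] W(1) Vl by simp
  have wspec: "wx R p v x \<in> plane R \<and> dot_perp R (ax p x) (wx R p v x) = \<one> \<and> dot_perp R (x!1) (wx R p v x) < p^v"
    unfolding wx_def using someI_ex[OF ex[unfolded Bex_def]] by simp
  show ?thesis using lx sp J W Vl ap sm wspec pjc by simp
qed

lemma RES_H:
  assumes pr: "prime p" and mp: "m = p^l" and Vl: "V \<le> l" and EP: "E \<subseteq> plane R" and n: "n \<ge> 2"
    and x: "x \<in> Gset R p V j v n E" and y: "y \<in> Gset R p V j v n E"
    and eqv: "(x,y) \<in> tuple_equiv R n E" and tt: "tau R p l j v x = tau R p l j v y"
  shows "\<exists>g\<in>SL2 R. map (mat_act R g) x = y"
proof -
  note fx = G_facts[OF pr mp Vl EP n x] and fy = G_facts[OF pr mp Vl EP n y]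
  define a where "a = ax p x" define b where "b = ax p y"
  define w where "w = wx R p v x" define w' where "w' = wx R p v y"
  have lxy: "length x = n" "length y = n" using fx fy by auto
  have pl: "x!i \<in> plane R" "y!i \<in> plane R" if "i < n" for i
    using fx fy that nth_mem[of i x] nth_mem[of i y] by auto
  have eq: "dot_perp R (x!i) (x!i') = dot_perp R (y!i) (y!i')" if "i < n" "i' < n" for i i'
    using eqv that by (auto simp: tuple_equiv_def)
  have ab: "a \<in> plane R" "b \<in> plane R" "w \<in> plane R" "w' \<in> plane R"
    using fx fy by (auto simp: a_def b_def w_def w'_def)
  have aw: "dot_perp R a w = \<one>" "dot_perp R b w' = \<one>" using fx fy by (auto simp: a_def b_def w_def w'_def)
  have p1: "p > 1" using pr prime_gt_1_int by blast
  have rng: "0 \<le> z \<and> z < m" if "z \<in> carrier R" for z using that by (simp add: in_carrier)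
  have B: "dot_perp R a (x!i) = dot_perp R b (y!i)" if i: "i < n" for i
  proof -
    have "dot_perp R (x!0) (x!i) = p^j \<otimes> dot_perp R a (x!i)"
      using dp_smul_left[of "p^j" a "x!i"] fx pl[OF i] ab by (simp add: a_def)
    moreover have "dot_perp R (y!0) (y!i) = p^j \<otimes> dot_perp R b (y!i)"
      using dp_smul_left[of "p^j" b "y!i"] fy pl[OF i] ab by (simp add: b_def)
    ultimately have me: "(p^j * dot_perp R a (x!i)) mod m = (p^j * dot_perp R b (y!i)) mod m"
      using eq[of 0 i] i n by (simp add: res_mult_eq)
    have d: "p^(l-j) dvd (dot_perp R a (x!i) - dot_perp R b (y!i))"
      by (rule mod_eq_dvd_cancel[OF pr mp _ _ _ me]) (use fx pow_not_dvd[OF p1] in auto)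
    have "map (\<lambda>z. dot_perp R (ax p x) z div p^(l-j)) x ! i = map (\<lambda>z. dot_perp R (ax p y) z div p^(l-j)) y ! i"
      using tt by (simp add: tau_def)
    then have "dot_perp R a (x!i) div p^(l-j) = dot_perp R b (y!i) div p^(l-j)"
      using i lxy by (simp add: a_def b_def)
    then show ?thesis using div_eq_from_dvd d by blast
  qed
  have A1: "dot_perp R (x!1) w = dot_perp R (y!1) w'" using tt by (simp add: tau_def w_def w'_def)
  have A: "dot_perp R (x!i) w = dot_perp R (y!i) w'" if i: "i < n" for i
  proof -
    have 1: "n > 1" using n by simp
    have ex: "dot_perp R (x!1) (x!i) = dot_perp R (x!1) w \<otimes> dot_perp R a (x!i) \<ominus> dot_perp R a (x!1) \<otimes> dot_perp R (x!i) w"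
      by (rule dp_expand[OF ab(1,3) pl(1)[OF 1] pl(1)[OF i] aw(1)])
    have ey: "dot_perp R (y!1) (y!i) = dot_perp R (y!1) w' \<otimes> dot_perp R b (y!i) \<ominus> dot_perp R b (y!1) \<otimes> dot_perp R (y!i) w'"
      by (rule dp_expand[OF ab(2,4) pl(2)[OF 1] pl(2)[OF i] aw(2)])
    have "dot_perp R (x!1) w \<otimes> dot_perp R a (x!i) \<ominus> dot_perp R a (x!1) \<otimes> dot_perp R (x!i) w
        = dot_perp R (x!1) w \<otimes> dot_perp R a (x!i) \<ominus> dot_perp R a (x!1) \<otimes> dot_perp R (y!i) w'"
      using ex ey eq[OF 1 i] A1 B[OF i] B[OF 1] by simp
    then have "dot_perp R a (x!1) \<otimes> dot_perp R (x!i) w = dot_perp R a (x!1) \<otimes> dot_perp R (y!i) w'"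
      by (rule minus_cancel_left[rotated 3]) (use ab pl[OF 1] pl[OF i] dp_closed in auto)
    then have me: "(dot_perp R a (x!1) * dot_perp R (x!i) w) mod m = (dot_perp R a (x!1) * dot_perp R (y!i) w') mod m"
      by (simp add: res_mult_eq)
    have d: "p^(l-v) dvd (dot_perp R (x!i) w - dot_perp R (y!i) w')"
      by (rule mod_eq_dvd_cancel[OF pr mp _ _ _ me]) (use fx in \<open>auto simp: a_def\<close>)
    have "map (\<lambda>z. dot_perp R z (wx R p v x) div p^(l-v)) x ! i = map (\<lambda>z. dot_perp R z (wx R p v y) div p^(l-v)) y ! i"
      using tt by (simp add: tau_def)
    then have "dot_perp R (x!i) w div p^(l-v) = dot_perp R (y!i) w' div p^(l-v)"
      using i lxy by (simp add: w_def w'_def)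
    then show ?thesis using div_eq_from_dvd d by blast
  qed
  show ?thesis
    by (rule FRAME[OF ab(1,3,2,4) aw]) (use fx fy lxy A B in auto)
qed

lemma tau_range:
  assumes pr: "prime p" and mp: "m = p^l" and Vl: "V \<le> l" and EP: "E \<subseteq> plane R" and n: "n \<ge> 2"
    and x: "x \<in> Gset R p V j v n E"
  shows "tau R p l j v x \<in> Tset p j v n"
proof -
  note fx = G_facts[OF pr mp Vl EP n x]
  have p1: "p > 1" using pr prime_gt_1_int by blast
  have rng: "0 \<le> z \<and> z < p^l" if "z \<in> carrier R" for z using that mp by (simp add: in_carrier)
  have dr: "0 \<le> z div p^(l-u) \<and> z div p^(l-u) < p^u" if "z \<in> carrier R" "u \<le> l" for z u
  proof -
    have "p^l = p^(l-u) * p^u" using that(2) by (simp add: power_add[symmetric])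
    then have "z < p^u * p^(l-u)" using rng[OF that(1)] by (simp add: mult.commute)
    then show ?thesis using rng[OF that(1)] p1 div_lt[of "p^(l-u)" z "p^u"] by (simp add: pos_imp_zdiv_nonneg_iff)
  qed
  have "x!1 \<in> set x" using fx n by auto
  then have "x!1 \<in> plane R" using fx by auto
  then have c1: "dot_perp R (x!1) (wx R p v x) \<in> {0..<p^v}"
    using fx dp_closed[of "x!1" "wx R p v x"] rng by auto
  have c2: "set (map (\<lambda>z. dot_perp R z (wx R p v x) div p^(l-v)) x) \<subseteq> {0..<p^v}"
  proof
    fix t assume "t \<in> set (map (\<lambda>z. dot_perp R z (wx R p v x) div p^(l-v)) x)"
    then obtain z where z: "z \<in> set x" "t = dot_perp R z (wx R p v x) div p^(l-v)" by auto
    have "z \<in> plane R" using z fx by auto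
    then have "dot_perp R z (wx R p v x) \<in> carrier R" using fx dp_closed by blast
    then show "t \<in> {0..<p^v}" using dr[of _ v] z fx by auto
  qed
  have c3: "set (map (\<lambda>z. dot_perp R (ax p x) z div p^(l-j)) x) \<subseteq> {0..<p^j}"
  proof
    fix t assume "t \<in> set (map (\<lambda>z. dot_perp R (ax p x) z div p^(l-j)) x)"
    then obtain z where z: "z \<in> set x" "t = dot_perp R (ax p x) z div p^(l-j)" by auto
    have "z \<in> plane R" using z fx by auto
    then have "dot_perp R (ax p x) z \<in> carrier R" using fx dp_closed by blast
    then show "t \<in> {0..<p^j}" using dr[of _ j] z fx by auto
  qed
  show ?thesis using c1 c2 c3 fx by (simp add: tau_def Tset_def)
qed

end

lemma pigeon:
  fixes G :: "'i \<Rightarrow> 'x set"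
  assumes "finite I" "I \<noteq> {}" "\<And>i. i \<in> I \<Longrightarrow> finite (G i)"
  shows "\<exists>i\<in>I. card (\<Union>i\<in>I. G i) \<le> card I * card (G i)"
proof (rule ccontr)
  assume "\<not> ?thesis"
  then have lt: "\<And>i. i \<in> I \<Longrightarrow> card I * card (G i) < card (\<Union>i\<in>I. G i)" by auto
  have "card I * card (\<Union>i\<in>I. G i) \<le> card I * (\<Sum>i\<in>I. card (G i))"
    by (rule mult_le_mono2) (rule card_UN_le[OF assms(1)])
  also have "\<dots> = (\<Sum>i\<in>I. card I * card (G i))" by (simp add: sum_distrib_left)
  also have "\<dots> < (\<Sum>i\<in>I. card (\<Union>i\<in>I. G i))" using lt assms(1,2) by (intro sum_strict_mono) auto
  also have "\<dots> = card I * card (\<Union>i\<in>I. G i)" by simp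
  finally show False by simp
qed

context residues begin

lemma Dv_card:
  assumes pr: "prime p" and mp: "m = p^l" and Vl: "V \<le> l"
  shows "card {t\<in>carrier R. p^V dvd t} \<le> nat p ^ (l - V)"
proof -
  have p1: "p > 1" using pr prime_gt_1_int by blast
  have "{t\<in>carrier R. p^V dvd t} \<subseteq> (\<lambda>s. p^V * s) ` {0..<p^(l-V)}"
  proof
    fix t assume t: "t \<in> {t\<in>carrier R. p^V dvd t}"
    then obtain s where s: "t = p^V * s" by auto
    have tr: "0 \<le> t" "t < p^l" using t mp by (auto simp: in_carrier)
    have "p^V > 0" using p1 by simp
    then have "0 \<le> s" using tr s by (simp add: zero_le_mult_iff)
    moreover have "p^V * s < p^V * p^(l-V)" using tr s Vl by (simp add: power_add[symmetric])
    then have "s < p^(l-V)" using p1 by simp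
    ultimately show "t \<in> (\<lambda>s. p^V * s) ` {0..<p^(l-V)}" using s by auto
  qed
  then have "card {t\<in>carrier R. p^V dvd t} \<le> card ((\<lambda>s. p^V * s) ` {0..<p^(l-V)})"
    by (intro card_mono) auto
  also have "\<dots> \<le> card {0..<p^(l-V)}" by (rule card_image_le) simp
  also have "\<dots> = nat p ^ (l-V)" using p1 by (simp add: nat_power_eq)
  finally show ?thesis .
qed

lemma bad_count:
  assumes pr: "prime p" and mp: "m = p^l" and Vl: "V \<le> l" and EP: "E \<subseteq> plane R" and n: "n \<ge> 2"
  shows "card (tuples n E - (\<Union>jv\<in>{..<V}\<times>{..<V}. Gset R p V (fst jv) (snd jv) n E))
     \<le> (nat p ^ (l - V))^2 * card E ^ (n-1) + card E * card (carrier R) * nat p ^ (l - V) * card E ^ (n-2)"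
proof -
  have p1: "p > 1" using pr prime_gt_1_int by blast
  have fE: "finite E" using EP finite_plane[OF finite] finite_subset by blast
  let ?T = "tuples n E"
  let ?Dv = "{t\<in>carrier R. p^V dvd t}"
  define A1 where "A1 = {x\<in>?T. p^V dvd fst (x!0) \<and> p^V dvd snd (x!0)}"
  define E' where "E' = {z\<in>E. \<not> (p^V dvd fst z \<and> p^V dvd snd z)}"
  define A2 where "A2 = {x\<in>?T. \<not> (p^V dvd fst (x!0) \<and> p^V dvd snd (x!0)) \<and> p^V dvd dot_perp R (ax p x) (x!1)}"
  have sub: "?T - (\<Union>jv\<in>{..<V}\<times>{..<V}. Gset R p V (fst jv) (snd jv) n E) \<subseteq> A1 \<union> A2"
  proof
    fix x assume x: "x \<in> ?T - (\<Union>jv\<in>{..<V}\<times>{..<V}. Gset R p V (fst jv) (snd jv) n E)"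
    show "x \<in> A1 \<union> A2"
    proof (rule ccontr)
      assume "x \<notin> A1 \<union> A2"
      then have c1: "\<not> (p^V dvd fst (x!0) \<and> p^V dvd snd (x!0))" and c2: "\<not> p^V dvd dot_perp R (ax p x) (x!1)"
        using x by (auto simp: A1_def A2_def)
      have "jj p (x!0) < V" using jj_props[OF c1] by simp
      moreover have "vv p (dot_perp R (ax p x) (x!1)) < V" using vv_props[OF c2] by simp
      moreover have "x \<in> Gset R p V (jj p (x!0)) (vv p (dot_perp R (ax p x) (x!1))) n E"
        using x c1 c2 by (auto simp: Gset_def)
      ultimately show False using x by auto
    qed
  qed
  have fT: "finite ?T" using finite_tuples[OF fE] .
  let ?D1 = "{z\<in>plane R. p^V dvd fst z \<and> p^V dvd snd z}"
  have "inj_on (\<lambda>x. (x!0, tl x)) A1"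
  proof (rule inj_onI)
    fix x y assume xy: "x \<in> A1" "y \<in> A1" "(x!0, tl x) = (y!0, tl y)"
    have "x \<noteq> []" "y \<noteq> []" using xy n by (auto simp: A1_def tuples_def)
    then have xs: "x = x!0 # tl x" and ys: "y = y!0 # tl y" by (simp_all add: hd_conv_nth[symmetric])
    have eqs: "x!0 = y!0" "tl x = tl y" using xy(3) by simp_all
    show "x = y" by (subst xs, subst ys) (simp only: eqs)
  qed
  moreover have "(\<lambda>x. (x!0, tl x)) ` A1 \<subseteq> ?D1 \<times> tuples (n-1) E"
  proof
    fix q assume "q \<in> (\<lambda>x. (x!0, tl x)) ` A1"
    then obtain x where x: "x \<in> A1" "q = (x!0, tl x)" by auto
    have lx: "length x = n" "set x \<subseteq> E" using x by (auto simp: A1_def tuples_def)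
    have "x!0 \<in> set x" using lx n by auto
    then have "x!0 \<in> plane R" using lx EP by auto
    moreover have "set (tl x) \<subseteq> E" using lx by (cases x) auto
    ultimately show "q \<in> ?D1 \<times> tuples (n-1) E" using x lx by (auto simp: A1_def tuples_def)
  qed
  ultimately have cA1: "card A1 \<le> card (?D1 \<times> tuples (n-1) E)"
    by (rule card_inj_on_le) (use fE finite_tuples[OF fE] finite_plane[OF finite] in auto)
  have "?D1 \<subseteq> ?Dv \<times> ?Dv" by (auto simp: plane_def)
  then have "card ?D1 \<le> card (?Dv \<times> ?Dv)" by (intro card_mono) auto
  also have "\<dots> \<le> (nat p ^ (l - V))^2"
    using Dv_card[OF pr mp Vl] by (simp add: card_cartesian_product power2_eq_square mult_le_mono)
  finally have cD1: "card ?D1 \<le> (nat p ^ (l - V))^2" .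
  have "card A1 \<le> card ?D1 * card E ^ (n-1)" using cA1 by (simp add: card_cartesian_product card_tuples[OF fE])
  then have A1b: "card A1 \<le> (nat p ^ (l - V))^2 * card E ^ (n-1)"
    by (rule le_trans) (rule mult_le_mono1[OF cD1])
  let ?S = "SIGMA z:E'. {b\<in>plane R. dot_perp R (cpt p (jj p z) z) b \<in> ?Dv}"
  have "inj_on (\<lambda>x. ((x!0, x!1), drop 2 x)) A2"
  proof (rule inj_onI)
    fix x y assume xy: "x \<in> A2" "y \<in> A2" "((x!0, x!1), drop 2 x) = ((y!0, y!1), drop 2 y)"
    have "length x = n" "length y = n" using xy by (auto simp: A2_def tuples_def)
    then have xs: "x = x!0 # x!1 # drop 2 x" and ys: "y = y!0 # y!1 # drop 2 y" using n list2[of x] list2[of y] by auto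
    have eqs: "x!0 = y!0" "x!1 = y!1" "drop 2 x = drop 2 y" using xy(3) by simp_all
    show "x = y" by (subst xs, subst ys) (simp only: eqs)
  qed
  moreover have "(\<lambda>x. ((x!0, x!1), drop 2 x)) ` A2 \<subseteq> ?S \<times> tuples (n-2) E"
  proof
    fix q assume "q \<in> (\<lambda>x. ((x!0, x!1), drop 2 x)) ` A2"
    then obtain x where x: "x \<in> A2" "q = ((x!0, x!1), drop 2 x)" by auto
    have lx: "length x = n" "set x \<subseteq> E" using x by (auto simp: A2_def tuples_def)
    have "x!0 \<in> set x" "x!1 \<in> set x" "set (drop 2 x) \<subseteq> set x" using lx n by (auto dest: in_set_dropD)
    then have m: "x!0 \<in> E" "x!1 \<in> E" "set (drop 2 x) \<subseteq> E" using lx by auto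
    have "dot_perp R (ax p x) (x!1) \<in> carrier R"
    proof -
      have "x!0 \<in> plane R" "x!1 \<in> plane R" using m EP by auto
      moreover have "ax p x \<in> plane R"
      proof -
        have "\<not> (p^V dvd fst (x!0) \<and> p^V dvd snd (x!0))" using x by (simp add: A2_def)
        then have J: "p^(jj p (x!0)) dvd fst (x!0)" "p^(jj p (x!0)) dvd snd (x!0)" using jj_props by auto
        have "0 \<le> fst (x!0)" "fst (x!0) < m" "0 \<le> snd (x!0)" "snd (x!0) < m"
          using \<open>x!0 \<in> plane R\<close> by (auto simp: plane_def in_carrier)
        then show ?thesis using div_range[of "fst (x!0)" m "p^jj p (x!0)"] div_range[of "snd (x!0)" m "p^jj p (x!0)"] p1
          by (auto simp: ax_def cpt_def plane_def in_carrier)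
      qed
      ultimately show ?thesis using dp_closed by blast
    qed
    then show "q \<in> ?S \<times> tuples (n-2) E" using x m EP lx
      by (auto simp: A2_def E'_def tuples_def ax_def)
  qed
  ultimately have cA2: "card A2 \<le> card (?S \<times> tuples (n-2) E)"
    by (rule card_inj_on_le) (use fE finite_tuples[OF fE] finite_plane[OF finite] in \<open>auto simp: E'_def\<close>)
  have "card ?S = (\<Sum>z\<in>E'. card {b\<in>plane R. dot_perp R (cpt p (jj p z) z) b \<in> ?Dv})"
    by (rule card_SigmaI) (use fE finite_plane[OF finite] in \<open>auto simp: E'_def\<close>)
  also have "\<dots> \<le> (\<Sum>z\<in>E'. card (carrier R) * nat p ^ (l - V))"
  proof (rule sum_mono)
    fix z assume z: "z \<in> E'"
    have c1: "\<not> (p^V dvd fst z \<and> p^V dvd snd z)" using z by (simp add: E'_def)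
    note J = jj_props[OF c1]
    have zr: "0 \<le> fst z" "fst z < m" "0 \<le> snd z" "snd z < m" using z EP by (auto simp: E'_def plane_def in_carrier)
    have ap: "cpt p (jj p z) z \<in> plane R"
      using zr div_range[of "fst z" m "p^jj p z"] div_range[of "snd z" m "p^jj p z"] p1
      by (auto simp: cpt_def plane_def in_carrier)
    have prim: "\<not> (p dvd fst (cpt p (jj p z) z) \<and> p dvd snd (cpt p (jj p z) z))"
      using cpt_prim[of p "jj p z" "fst z" "snd z"] J by (simp add: cpt_def)
    have U: "fst (cpt p (jj p z) z) \<in> Units R \<or> snd (cpt p (jj p z) z) \<in> Units R"
      using prim ap unit_of_ndvd[OF pr mp] by (auto simp: plane_def)
    have "card {b\<in>plane R. dot_perp R (cpt p (jj p z) z) b \<in> ?Dv} \<le> card (carrier R) * card (carrier R \<inter> ?Dv)"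
      by (rule line_count[OF finite ap U])
    also have "card (carrier R \<inter> ?Dv) \<le> nat p ^ (l - V)"
    proof -
      have "carrier R \<inter> ?Dv = ?Dv" by auto
      then show ?thesis using Dv_card[OF pr mp Vl] by simp
    qed
    finally show "card {b\<in>plane R. dot_perp R (cpt p (jj p z) z) b \<in> ?Dv} \<le> card (carrier R) * nat p ^ (l - V)"
      using mult_le_mono2 le_trans by blast
  qed
  also have "\<dots> \<le> card E * (card (carrier R) * nat p ^ (l - V))"
    using card_mono[OF fE, of E'] by (simp add: E'_def)
  finally have cS: "card ?S \<le> card E * card (carrier R) * nat p ^ (l - V)" by (simp add: mult_ac)
  have "card A2 \<le> card ?S * card E ^ (n-2)" using cA2 by (simp add: card_cartesian_product card_tuples[OF fE])
  then have A2b: "card A2 \<le> card E * card (carrier R) * nat p ^ (l - V) * card E ^ (n-2)"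
    by (rule le_trans) (rule mult_le_mono1[OF cS])
  have "card (?T - (\<Union>jv\<in>{..<V}\<times>{..<V}. Gset R p V (fst jv) (snd jv) n E)) \<le> card (A1 \<union> A2)"
    using sub fT by (intro card_mono) (auto simp: A1_def A2_def)
  also have "\<dots> \<le> card A1 + card A2" by (rule card_Un_le)
  finally show ?thesis using A1b A2b by linarith
qed

end

context residues begin

lemma card_carrier_res: "card (carrier R) = nat m"
  using m_gt_one by (simp add: res_carrier_eq)

lemma RES_SMALL:
  assumes pr: "prime p" and mp: "m = p^l" and Vl: "V \<le> l" and V1: "1 \<le> V" and EP: "E \<subseteq> plane R"
    and n: "n \<ge> 2" and dens: "4 * real (card (carrier R))^2 \<le> 2^V * real (card E)"
  shows "real (card E)^(2*n) \<le> 4 * real V^4 * real (nat p)^(V*(2*n+1)) * real (card (config_classes R n E)) * (\<Sum>g\<in>SL2 R. fE R E g ^ n)"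
proof -
  have p1: "p > 1" using pr prime_gt_1_int by blast
  define q where "q = nat p"
  have q2: "q \<ge> 2" using p1 by (simp add: q_def)
  have fE: "finite E" using EP finite_plane[OF finite] finite_subset by blast
  define M where "M = card E"
  define N where "N = card (carrier R)"
  have Nq: "N = q^l" using card_carrier_res mp p1 by (simp add: N_def q_def nat_power_eq)
  let ?T = "tuples n E"
  define I where "I = {..<V} \<times> {..<V}"
  define Good where "Good = (\<Union>jv\<in>I. Gset R p V (fst jv) (snd jv) n E)"
  have fT: "finite ?T" using finite_tuples[OF fE] .
  have GT: "Good \<subseteq> ?T" by (auto simp: Good_def Gset_def)
  have bc: "card (?T - Good) \<le> (q ^ (l - V))^2 * M ^ (n-1) + M * N * q ^ (l - V) * M ^ (n-2)"
    using bad_count[OF pr mp Vl EP n] by (simp add: Good_def I_def M_def N_def q_def)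
  have h1: "2^V * (q ^ (l - V))^2 \<le> N^2"
  proof -
    have "2^V \<le> q^V" using q2 by (simp add: power_mono)
    also have "q^V \<le> (q^V)^2" using q2 by (simp add: power2_eq_square)
    finally have "2^V * (q ^ (l - V))^2 \<le> (q^V)^2 * (q ^ (l - V))^2" by simp
    also have "\<dots> = (q^V * q^(l-V))^2" by (simp add: power_mult_distrib)
    also have "q^V * q^(l-V) = N" using Nq Vl by (simp add: power_add[symmetric])
    finally show ?thesis .
  qed
  have h2: "2^V * (N * q ^ (l - V)) \<le> N^2"
  proof -
    have "2^V \<le> q^V" using q2 by (simp add: power_mono)
    then have "2^V * (N * q ^ (l - V)) \<le> q^V * (N * q ^ (l - V))" by simp
    also have "\<dots> = N * (q^V * q^(l-V))" by (simp add: mult_ac)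
    also have "q^V * q^(l-V) = N" using Nq Vl by (simp add: power_add[symmetric])
    finally show ?thesis by (simp add: power2_eq_square)
  qed
  have n12: "n - 1 = Suc (n-2)" using n by simp
  have Mn1: "M * M^(n-2) = M^(n-1)" by (simp only: n12 power_Suc)
  have bc': "card (?T - Good) \<le> (q^(l-V))^2 * M^(n-1) + (N*q^(l-V)) * M^(n-1)"
  proof -
    have e: "M * N * q^(l-V) * M^(n-2) = (N*q^(l-V)) * (M * M^(n-2))" by (simp add: mult_ac)
    have e2: "M * N * q^(l-V) * M^(n-2) = (N*q^(l-V)) * M^(n-1)" by (simp only: e Mn1)
    show ?thesis using bc e2 by linarith
  qed
  have "2^V * card (?T - Good) \<le> 2^V * ((q^(l-V))^2 * M^(n-1) + (N*q^(l-V)) * M^(n-1))"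
    using bc' by (rule mult_le_mono2)
  also have "\<dots> = 2^V * (q ^ (l - V))^2 * M ^ (n-1) + 2^V * (N * q ^ (l - V)) * M^(n-1)"
    by (simp only: add_mult_distrib2 mult.assoc)
  also have "\<dots> \<le> N^2 * M^(n-1) + N^2 * M^(n-1)"
    using h1 h2 by (intro add_mono mult_le_mono1)
  also have "N^2 * M^(n-1) + N^2 * M^(n-1) = 2 * (N^2 * M^(n-1))" by simp
  finally have b1: "2^V * card (?T - Good) \<le> 2 * (N^2 * M^(n-1))" .
  have "real (2^V * card (?T - Good)) \<le> real (2 * (N^2 * M^(n-1)))" using b1 by (simp only: of_nat_le_iff)
  then have b2: "real (2^V) * real (card (?T - Good)) \<le> 2 * real N^2 * real M^(n-1)"
    by (simp only: of_nat_mult of_nat_power of_nat_numeral mult.assoc)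
  have "real (2^V) * real (card (?T - Good)) \<le> 2 * real N^2 * real M^(n-1)" by (rule b2)
  also have "2 * real N^2 * real M^(n-1) \<le> 2^V * real M / 2 * real M^(n-1)"
    using dens by (intro mult_right_mono) (auto simp: N_def M_def)
  also have "\<dots> = real (2^V) * (real M^n / 2)"
  proof -
    have nn1: "n = Suc (n-1)" using n by simp
    have "real M * real M^(n-1) = real M^n" by (subst (2) nn1) (simp only: power_Suc)
    then show ?thesis by (simp add: field_simps)
  qed
  finally have bad: "real (card (?T - Good)) \<le> real M^n / 2" by simp
  have cT: "card ?T = M^n" using card_tuples[OF fE] by (simp add: M_def)
  have "card ?T = card Good + card (?T - Good)"
    using card_Diff_subset[OF finite_subset[OF GT fT] GT] card_mono[OF fT GT] by linarith
  then have goodb: "real M^n / 2 \<le> real (card Good)" using bad cT by (simp flip: of_nat_add of_nat_power)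
  have "(0,0) \<in> I" using V1 by (simp add: I_def)
  then have "I \<noteq> {}" by auto
  have finG: "\<And>i. i \<in> I \<Longrightarrow> finite (Gset R p V (fst i) (snd i) n E)"
    by (rule finite_subset[OF _ fT]) (auto simp: Gset_def)
  have fI: "finite I" by (simp add: I_def)
  have "\<exists>i\<in>I. card (\<Union>i\<in>I. Gset R p V (fst i) (snd i) n E) \<le> card I * card (Gset R p V (fst i) (snd i) n E)"
    by (rule pigeon[OF fI \<open>I \<noteq> {}\<close> finG])
  then have "\<exists>i\<in>I. card Good \<le> card I * card (Gset R p V (fst i) (snd i) n E)"
    by (simp only: Good_def)
  then obtain jv where jv: "jv \<in> I" "card Good \<le> card I * card (Gset R p V (fst jv) (snd jv) n E)" ..
  define j where "j = fst jv" define v where "v = snd jv"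
  have jvV: "j < V" "v < V" using jv(1) by (auto simp: I_def j_def v_def)
  let ?G = "Gset R p V j v n E"
  have cI: "card I = V^2" by (simp add: I_def card_cartesian_product power2_eq_square)
  have gen: "real (card ?G)^2 \<le> real (card (Tset p j v n)) * real (card (config_classes R n E)) * (\<Sum>g\<in>SL2 R. fE R E g ^ n)"
  proof (rule GEN[OF finite EP])
    show "?G \<subseteq> ?T" by (auto simp: Gset_def)
    show "tau R p l j v ` ?G \<subseteq> Tset p j v n" using tau_range[OF pr mp Vl EP n] by auto
    show "finite (Tset p j v n)" by (rule finite_Tset)
    show "\<And>x y. x \<in> ?G \<Longrightarrow> y \<in> ?G \<Longrightarrow> (x, y) \<in> tuple_equiv R n E \<Longrightarrow> tau R p l j v x = tau R p l j v y
          \<Longrightarrow> \<exists>g\<in>SL2 R. map (mat_act R g) x = y"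
      using RES_H[OF pr mp Vl EP n] by blast
  qed
  have cTs: "card (Tset p j v n) \<le> q^(V*(2*n+1))"
  proof -
    have "card (Tset p j v n) = q^v * (q^v)^n * (q^j)^n" using card_Tset[of p j v n] p1
      by (simp add: q_def nat_power_eq)
    also have "\<dots> \<le> q^V * (q^V)^n * (q^V)^n"
      using jvV q2 by (intro mult_le_mono power_mono power_increasing) auto
    also have "\<dots> = q^(V*(2*n+1))"
    proof -
      have e: "V*(2*n+1) = V + V*n + V*n" by (simp add: algebra_simps)
      show ?thesis by (simp only: e power_add power_mult)
    qed
    finally show ?thesis .
  qed
  have nn: "0 \<le> (\<Sum>g\<in>SL2 R. fE R E g ^ n)" unfolding fE_def by (intro sum_nonneg zero_le_power sum_nonneg) auto
  have KS: "0 \<le> real (card (config_classes R n E)) * (\<Sum>g\<in>SL2 R. fE R E g ^ n)" using nn by simp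
  have "real M^n / 2 \<le> real V^2 * real (card ?G)"
    using goodb jv(2) cI by (simp add: j_def v_def flip: of_nat_mult of_nat_power)
  then have "(real M^n / 2)^2 \<le> (real V^2 * real (card ?G))^2" by (intro power_mono) auto
  moreover have "(real M^n / 2)^2 = real M^(2*n) / 4"
    by (simp add: power_divide power_mult[symmetric] mult.commute)
  moreover have "(real V^2 * real (card ?G))^2 = real V^4 * real (card ?G)^2"
    by (simp add: power_mult_distrib power_mult[symmetric])
  ultimately have "real M^(2*n) \<le> 4 * real V^4 * real (card ?G)^2" by simp
  also have "\<dots> \<le> 4 * real V^4 * (real (card (Tset p j v n)) * (real (card (config_classes R n E)) * (\<Sum>g\<in>SL2 R. fE R E g ^ n)))"
    using gen by (intro mult_left_mono) (auto simp: mult_ac)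
  also have "\<dots> \<le> 4 * real V^4 * (real q^(V*(2*n+1)) * (real (card (config_classes R n E)) * (\<Sum>g\<in>SL2 R. fE R E g ^ n)))"
    using cTs KS by (intro mult_left_mono mult_right_mono) (auto simp flip: of_nat_power)
  finally show ?thesis by (simp add: M_def q_def mult_ac)
qed

end




lemma unit_arith:
  fixes M X b :: real
  assumes "b \<le> M*X + X*X" "4*X \<le> M" "0 \<le> X"
  shows "2*b \<le> M^2"
proof -
  have M0: "0 \<le> M" using assms by linarith
  have 1: "M*X \<le> M*(M/4)" using assms M0 by (intro mult_left_mono) auto
  have 2: "X*X \<le> (M/4)*(M/4)" using assms by (intro mult_mono) auto
  have h1: "M*X \<le> (M*M)/4" using 1 by simp
  have h2: "X*X \<le> (M*M)/16" using 2 by simp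
  have "0 \<le> M*M" by simp
  then have "2*b \<le> M*M" using h1 h2 assms(1) by linarith
  then show ?thesis by (simp add: power2_eq_square)
qed

theorem lemma2p6:
  fixes k :: nat and \<epsilon> c :: real
  assumes "k \<ge> 1" and "\<epsilon> > 0" and "c > 0"
  shows "\<exists>C>0. \<forall>(R :: int ring) (E :: (int \<times> int) set).
     E \<subseteq> plane R \<longrightarrow>
     ((field R \<and> finite (carrier R) \<and> real (card E) \<ge> c * real (card (carrier R)) powr (1 + \<epsilon>))
      \<or> (\<exists>(p :: int) (l :: nat). prime p \<and> l \<ge> 1 \<and> R = residue_ring (p ^ l) \<and>
           real (card E) \<ge> c * real_of_int p powr (2 * real l - 1 + 1 / real (k + 1) + \<epsilon>)))
     \<longrightarrow> real (card E) ^ (2 * (k + 1))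
           \<le> C * real (card (config_classes R (k + 1) E)) * (\<Sum>g\<in>SL2 R. fE R E g ^ (k + 1))"
proof -
  have n2: "k + 1 \<ge> 2" using assms(1) by simp
  define Q :: nat where "Q = nat \<lceil>(4/c) powr (1/\<epsilon>)\<rceil> + 1"
  have Q1: "real Q \<ge> 1" unfolding Q_def by (simp only: of_nat_add of_nat_1)
  have Qbig: "4 \<le> c * x powr \<epsilon>" if x: "x \<ge> real Q" for x :: real
  proof -
    have "(4/c) powr (1/\<epsilon>) \<le> real (nat \<lceil>(4/c) powr (1/\<epsilon>)\<rceil>)" by (rule real_nat_ceiling_ge)
    moreover have "0 \<le> (4/c) powr (1/\<epsilon>)" by simp
    moreover have "real Q = real (nat \<lceil>(4/c) powr (1/\<epsilon>)\<rceil>) + 1" by (simp add: Q_def)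
    ultimately have lt: "(4/c) powr (1/\<epsilon>) < x" using x by linarith
    have pos: "0 < (4/c) powr (1/\<epsilon>)" using assms by simp
    have "((4/c) powr (1/\<epsilon>)) powr \<epsilon> < x powr \<epsilon>"
      using lt pos assms(2) by (intro powr_less_mono2) auto
    moreover have "((4/c) powr (1/\<epsilon>)) powr \<epsilon> = 4/c" using assms by (simp add: powr_powr)
    ultimately have "4/c < x powr \<epsilon>" by simp
    then show ?thesis using assms(3) by (simp add: field_simps)
  qed
  obtain V0 :: nat where V0: "4 * real Q / c < 2^V0" using real_arch_pow[of 2 "4 * real Q / c"] by auto
  define V where "V = V0 + 1"
  have V1: "1 \<le> V" by (simp add: V_def)
  have V2: "4 * real Q / c \<le> 2^V"
  proof -
    have "(2::real)^V0 \<le> 2^V" by (simp add: V_def)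
    then show ?thesis using V0 by linarith
  qed
  define C where "C = 4 + real Q^(2*(k+1)) + real Q^(V*(2*(k+1))) + 4 * real V^4 * real Q^(V*(2*(k+1)+1))"
  have Cge: "4 \<le> C" "real Q^(2*(k+1)) \<le> C" "real Q^(V*(2*(k+1))) \<le> C" "4 * real V^4 * real Q^(V*(2*(k+1)+1)) \<le> C"
    using Q1 by (simp_all add: C_def)
  show ?thesis
  proof (intro exI[of _ C] conjI allI impI)
    show "C > 0" using Cge by linarith
    fix R :: "int ring" and E :: "(int \<times> int) set"
    assume EP: "E \<subseteq> plane R"
    assume hyp: "(field R \<and> finite (carrier R) \<and> real (card E) \<ge> c * real (card (carrier R)) powr (1 + \<epsilon>))
      \<or> (\<exists>(p :: int) (l :: nat). prime p \<and> l \<ge> 1 \<and> R = residue_ring (p ^ l) \<and>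
           real (card E) \<ge> c * real_of_int p powr (2 * real l - 1 + 1 / real (k + 1) + \<epsilon>))"
    let ?K = "real (card (config_classes R (k + 1) E))"
    let ?S = "(\<Sum>g\<in>SL2 R. fE R E g ^ (k + 1))"
    let ?L = "real (card E) ^ (2 * (k + 1))"
    have Snn: "0 \<le> ?S" unfolding fE_def by (intro sum_nonneg zero_le_power sum_nonneg) auto
    have KS: "0 \<le> ?K * ?S" using Snn by simp
    have suff: "?L \<le> C * ?K * ?S" if "X \<le> C" "?L \<le> X * ?K * ?S" for X
    proof -
      have "X * (?K * ?S) \<le> C * (?K * ?S)" using that(1) KS by (rule mult_right_mono)
      then show ?thesis using that(2) by (simp add: mult.assoc)
    qed
    show "?L \<le> C * ?K * ?S"
    proof (cases "E = {}")
      case True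
      have L0: "?L = 0" using True by simp
      have nn: "0 \<le> C * (?K * ?S)" by (rule mult_nonneg_nonneg) (use Cge(1) KS in auto)
      show ?thesis by (simp only: L0 mult.assoc nn)
    next
      case Ene: False
      from hyp show ?thesis
      proof
        assume F: "field R \<and> finite (carrier R) \<and> real (card E) \<ge> c * real (card (carrier R)) powr (1 + \<epsilon>)"
        have cr: "cring R" using F fieldE(1) by blast
        have fin: "finite (carrier R)" using F by simp
        define N where "N = card (carrier R)"
        have zc: "\<zero>\<^bsub>R\<^esub> \<in> carrier R" using cr by (simp add: cring.axioms(1) ring.ring_simprules(2))
        show ?thesis
        proof (cases "real N < real Q")
          case True
          have "?L \<le> real N ^ (2*(k+1)) * ?K * ?S" unfolding N_def by (rule cring.SMALL[OF cr fin EP Ene])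
          moreover have "real N ^ (2*(k+1)) \<le> C"
            using True Cge(2) power_mono[of "real N" "real Q" "2*(k+1)"] by simp
          ultimately show ?thesis using suff by blast
        next
          case False
          then have 4: "4 \<le> c * real N powr \<epsilon>" using Qbig by simp
          have Npos: "0 < real N" using zc fin by (auto simp: N_def card_gt_0_iff)
          have "real (card E) \<ge> c * real N powr (1 + \<epsilon>)" using F by (simp add: N_def)
          also have "c * real N powr (1 + \<epsilon>) = real N * (c * real N powr \<epsilon>)"
            using Npos by (simp add: powr_add)
          finally have ME: "4 * real N \<le> real (card E)" using 4 Npos
            by (metis mult.commute mult_left_mono order_trans less_eq_real_def)
          have U1: "card (carrier R - Units R) = 1"
          proof -
            have "carrier R - Units R = {\<zero>\<^bsub>R\<^esub>}" using fieldE(4)[of R] F zc by auto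
            then show ?thesis by simp
          qed
          have "card {p\<in>E\<times>E. dot_perp R (fst p) (snd p) \<notin> Units R} \<le> card E * N + N * N"
            using cring.bad_bound[OF cr fin EP] U1 by (simp add: N_def power2_eq_square)
          then have "real (card {p\<in>E\<times>E. dot_perp R (fst p) (snd p) \<notin> Units R}) \<le> real (card E) * real N + real N * real N"
            by (simp flip: of_nat_mult of_nat_add)
          then have "2 * real (card {p\<in>E\<times>E. dot_perp R (fst p) (snd p) \<notin> Units R}) \<le> real (card E)^2"
            using unit_arith ME by simp
          then have "?L \<le> 4 * ?K * ?S" by (rule cring.UNIT[OF cr fin EP n2])
          then show ?thesis using suff Cge(1) by blast
        qed
      next
        assume "\<exists>(p :: int) (l :: nat). prime p \<and> l \<ge> 1 \<and> R = residue_ring (p ^ l) \<and>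
           real (card E) \<ge> c * real_of_int p powr (2 * real l - 1 + 1 / real (k + 1) + \<epsilon>)"
        then obtain p :: int and l :: nat where pr: "prime p" and l1: "l \<ge> 1" and Rdef: "R = residue_ring (p^l)"
          and ME0: "real (card E) \<ge> c * real_of_int p powr (2 * real l - 1 + 1 / real (k + 1) + \<epsilon>)" by blast
        have p1: "p > 1" using pr prime_gt_1_int by blast
        have res: "residues (p^l)" by unfold_locales (use p1 l1 in simp)
        have cr: "cring R" using residues.cring[OF res] Rdef by simp
        have fin: "finite (carrier R)" using residues.finite[OF res] Rdef by simp
        define q where "q = nat p"
        have qp: "real q = real_of_int p" using p1 by (simp add: q_def)
        have q2: "real q \<ge> 2" using p1 qp by linarith
        have Nq: "card (carrier R) = q^l" using residues.card_carrier_res[OF res] Rdef p1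
          by (simp add: q_def nat_power_eq)
        have e1: "2 * real l - 1 = real (2*l - 1)" using l1 by (simp add: of_nat_diff)
        have pw: "real_of_int p powr (2 * real l - 1 + 1 / real (k + 1) + \<epsilon>)
            = real q^(2*l-1) * (real q powr (1 / real (k + 1)) * real q powr \<epsilon>)"
          using q2 by (simp add: qp[symmetric] powr_add e1 powr_realpow)
        have pk: "1 \<le> real q powr (1 / real (k + 1))" using q2 by (simp add: ge_one_powr_ge_zero)
        have ppos: "0 < real q^(2*l-1)" using q2 by simp
        show ?thesis
        proof (cases "real q < real Q")
          case False
          then have 4: "4 \<le> c * real q powr \<epsilon>" using Qbig by simp
          have "c * real_of_int p powr (2 * real l - 1 + 1 / real (k + 1) + \<epsilon>)
             = real q^(2*l-1) * real q powr (1 / real (k + 1)) * (c * real q powr \<epsilon>)"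
            using pw by (simp add: mult_ac)
          also have "\<dots> \<ge> real q^(2*l-1) * 1 * 4"
            using 4 pk ppos by (intro mult_mono) auto
          finally have ME: "4 * real q^(2*l-1) \<le> real (card E)" using ME0 by simp
          have nu: "card (carrier R - Units R) \<le> q^(l-1)"
            using residues.nonunits_card[OF res pr refl l1] Rdef by (simp add: q_def)
          have "card {p\<in>E\<times>E. dot_perp R (fst p) (snd p) \<notin> Units R}
              \<le> card E * card (carrier R) * card (carrier R - Units R) + (card (carrier R - Units R))^2 * (card (carrier R))^2"
            by (rule cring.bad_bound[OF cr fin EP])
          also have "\<dots> \<le> card E * q^l * q^(l-1) + (q^(l-1))^2 * (q^l)^2"
            using nu Nq by (intro add_mono mult_le_mono power_mono) auto
          also have "\<dots> = card E * q^(2*l-1) + q^(2*l-1) * q^(2*l-1)"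
          proof -
            have ee: "l + (l-1) = 2*l - 1" using l1 by simp
            have "q^l * q^(l-1) = q^(2*l-1)" by (simp only: power_add[symmetric] ee)
            moreover have "(q^(l-1))^2 * (q^l)^2 = (q^l * q^(l-1)) * (q^l * q^(l-1))"
              by (simp add: power2_eq_square mult_ac)
            ultimately show ?thesis by (simp add: mult.assoc)
          qed
          finally have "real (card {p\<in>E\<times>E. dot_perp R (fst p) (snd p) \<notin> Units R})
              \<le> real (card E) * real q^(2*l-1) + real q^(2*l-1) * real q^(2*l-1)"
            by (simp flip: of_nat_mult of_nat_add of_nat_power)
          then have "2 * real (card {p\<in>E\<times>E. dot_perp R (fst p) (snd p) \<notin> Units R}) \<le> real (card E)^2"
            using unit_arith ME ppos by simp
          then have "?L \<le> 4 * ?K * ?S" by (rule cring.UNIT[OF cr fin EP n2])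
          then show ?thesis using suff Cge(1) by blast
        next
          case True
          have "c * real_of_int p powr (2 * real l - 1 + 1 / real (k + 1) + \<epsilon>)
             = c * real q^(2*l-1) * (real q powr (1 / real (k + 1)) * real q powr \<epsilon>)"
            using pw by (simp add: mult_ac)
          also have "\<dots> \<ge> c * real q^(2*l-1) * 1"
          proof (intro mult_left_mono)
            show "1 \<le> real q powr (1 / real (k + 1)) * real q powr \<epsilon>"
            proof -
              have b: "1 \<le> real q powr \<epsilon>" using q2 assms(2) by (intro ge_one_powr_ge_zero) auto
              show ?thesis using mult_mono[OF pk b] by simp
            qed
          qed (use assms(3) ppos in auto)
          finally have ME: "c * real q^(2*l-1) \<le> real (card E)" using ME0 by simp
          show ?thesis
          proof (cases "l < V")
            case True
            have "?L \<le> real (card (carrier R)) ^ (2*(k+1)) * ?K * ?S" by (rule cring.SMALL[OF cr fin EP Ene])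
            moreover have "real (card (carrier R)) ^ (2*(k+1)) \<le> C"
            proof -
              have "real (card (carrier R)) = real q^l" using Nq by simp
              also have "\<dots> \<le> real Q^l" using \<open>real q < real Q\<close> q2 by (intro power_mono) auto
              also have "\<dots> \<le> real Q^V" using Q1 True by (intro power_increasing) auto
              finally have "real (card (carrier R)) ^ (2*(k+1)) \<le> (real Q^V)^(2*(k+1))"
                by (intro power_mono) auto
              also have "\<dots> = real Q^(V*(2*(k+1)))" by (simp only: power_mult)
              finally show ?thesis using Cge(3) by linarith
            qed
            ultimately show ?thesis using suff by blast
          next
            case False
            then have Vl: "V \<le> l" by simp
            have dens: "4 * real (card (carrier (residue_ring (p^l))))^2 \<le> 2^V * real (card E)"
            proof -
              have "real (card (carrier (residue_ring (p^l))))^2 = real q * real q^(2*l-1)"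
                using Nq Rdef l1 by (simp add: power_mult[symmetric] power_Suc[symmetric] mult.commute)
              also have "4 * (real q * real q^(2*l-1)) \<le> 4 * real Q / c * (c * real q^(2*l-1))"
                using True assms(3) ppos by (simp add: field_simps)
              also have "\<dots> \<le> 2^V * real (card E)"
                using V2 ME assms(3) ppos by (intro mult_mono) auto
              finally show ?thesis by simp
            qed
            have "?L \<le> 4 * real V^4 * real (nat p)^(V*(2*(k+1)+1)) * ?K * ?S"
              using residues.RES_SMALL[OF res pr refl Vl V1 _ n2 dens] EP Rdef by simp
            moreover have "4 * real V^4 * real (nat p)^(V*(2*(k+1)+1)) \<le> C"
            proof -
              have "real (nat p)^(V*(2*(k+1)+1)) \<le> real Q^(V*(2*(k+1)+1))"
                using True q2 by (intro power_mono) (auto simp: q_def)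
              then show ?thesis using Cge(4) by (smt (verit) mult_left_mono zero_le_power of_nat_0_le_iff)
            qed
            ultimately show ?thesis using suff by blast
          qed
        qed
      qed
    qed
  qed
qed


end
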